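(* The Hopf monoid of simplicial complexes $\mathbf{k}\mathbf{SC}$ is free commutative, free cocommutative, and self-dual.
   Context: $\mathbf{k}$ is a field of characteristic $0$. A simplicial complex on a finite ground set $I$ is a collection $\Gamma\subseteq2^I$ that is downward closed ($Y\subseteq X\in\Gamma\Rightarrow Y\in\Gamma$). $\mathbf{SC}[I]$ is the set of simplicial complexes on $I$ and $\mathbf{k}\mathbf{SC}[I]$ the vector space with basis $\mathbf{SC}[I]$; bijections act by relabelling. Multiplication: for $\Gamma_1$ on $S$, $\Gamma_2$ on $T$ disjoint, $m_{S,T}(\Gamma_1,\Gamma_2)=\Gamma_1\sqcup\Gamma_2=\{A\subseteq S\sqcup T: A\in\Gamma_1\text{ or }A\in\Gamma_2\}$. Comultiplication: $\Delta_{S,T}(\Gamma)=\Gamma|S\otimes\Gamma|T$ where $\Gamma|S=\Gamma\cap2^S$. For a set species $\mathbf{q}$ with $\mathbf{q}[\emptyset]=\emptyset$, $\mathcal{S}(\mathbf{q})[I]$ has basis the pairs $(A,\{x_i\})$ with $A$ an unordered set partition of $I$ into nonempty blocks $A_i$ and $x_i\in\mathbf{q}[A_i]$; the free commutative monoid structure is union of such data; the free cocommutative comonoid structure sends $(A,\{x_i\})$ to $(A|_S,\{x_i\}_{A_i\subseteq S})\otimes(A|_T,\{x_i\}_{A_i\subseteq T})$ if $S$ is a union of blocks of $A$, and to $0$ otherwise. A vector space monoid (resp. comonoid) is free commutative (resp. free cocommutative) if it is isomorphic as a monoid (resp. comonoid) to some $\mathcal{S}(\mathbf{q})$. A vector space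 Hopf monoid is self-dual if there is a species isomorphism to its linear dual (with dual product $\Delta^*$ and coproduct $m^*$) that is simultaneously a monoid and a comonoid isomorphism. *)

theory Defs
  imports Main "HOL-Library.Disjoint_Sets"
begin

definition supp :: "('b \<Rightarrow> 'k::zero) \<Rightarrow> 'b set" where
  "supp f = {x. f x \<noteq> 0}"

text \<open>The vector space with basis B: finitely supported functions B -> k.\<close>
definition fspace :: "'b set \<Rightarrow> ('b \<Rightarrow> 'k::zero) set" where
  "fspace B = {f. finite (supp f) \<and> supp f \<subseteq> B}"

definition delta :: "'b \<Rightarrow> 'b \<Rightarrow> 'k::{zero,one}" where
  "delta x = (\<lambda>y. if y = x then 1 else 0)"

text \<open>Linear extension of a partial map on basis elements given by a functional relation R.\<close>
definition linrel :: "('b \<Rightarrow> 'c \<Rightarrow> bool) \<Rightarrow> ('b \<Rightarrow> 'k::comm_monoid_add) \<Rightarrow> 'c \<Rightarrow> 'k" where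
  "linrel R f = (\<lambda>y. \<Sum>x\<in>supp f. if R x y then f x else 0)"

text \<open>Tensor product of linear maps; tensors of V (basis B) and W (basis C) are
  finitely supported functions on B \<times> C.\<close>
definition tensor_map :: "(('b \<Rightarrow> 'k) \<Rightarrow> ('c \<Rightarrow> 'k)) \<Rightarrow> (('d \<Rightarrow> 'k) \<Rightarrow> ('e \<Rightarrow> 'k))
    \<Rightarrow> ('b \<times> 'd \<Rightarrow> 'k::comm_ring_1) \<Rightarrow> 'c \<times> 'e \<Rightarrow> 'k" where
  "tensor_map \<phi> \<psi> F = (\<lambda>(u, v). \<Sum>p\<in>supp F. F p * \<phi> (delta (fst p)) u * \<psi> (delta (snd p)) v)"

definition linear_on :: "('b \<Rightarrow> 'k) set \<Rightarrow> ('c \<Rightarrow> 'k) set \<Rightarrow> (('b \<Rightarrow> 'k) \<Rightarrow> ('c \<Rightarrow> 'k::comm_ring_1)) \<Rightarrow> bool" where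
  "linear_on V W \<phi> \<longleftrightarrow> (\<forall>f\<in>V. \<phi> f \<in> W)
     \<and> (\<forall>f\<in>V. \<forall>g\<in>V. \<phi> (\<lambda>x. f x + g x) = (\<lambda>y. \<phi> f y + \<phi> g y))
     \<and> (\<forall>c. \<forall>f\<in>V. \<phi> (\<lambda>x. c * f x) = (\<lambda>y. c * \<phi> f y))"

definition lin_iso :: "('b \<Rightarrow> 'k) set \<Rightarrow> ('c \<Rightarrow> 'k) set \<Rightarrow> (('b \<Rightarrow> 'k) \<Rightarrow> ('c \<Rightarrow> 'k::comm_ring_1)) \<Rightarrow> bool" where
  "lin_iso V W \<phi> \<longleftrightarrow> linear_on V W \<phi> \<and> bij_betw \<phi> V W"

text \<open>Species on finite subsets of the type 'a; the component at I is the vector space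
  fspace (basis H I); a bijection \<sigma> : I \<rightarrow> J acts on basis elements by act H \<sigma> I.
  mult H S T : H[S] \<otimes> H[T] \<rightarrow> H[S \<union> T], comult H S T : H[S \<union> T] \<rightarrow> H[S] \<otimes> H[T],
  munit H \<in> H[{}] is the unit, ccounit H : H[{}] \<rightarrow> k the counit.\<close>
record ('a, 'b, 'k) lspecies =
  basis :: "'a set \<Rightarrow> 'b set"
  act :: "('a \<Rightarrow> 'a) \<Rightarrow> 'a set \<Rightarrow> 'b \<Rightarrow> 'b"
  mult :: "'a set \<Rightarrow> 'a set \<Rightarrow> ('b \<times> 'b \<Rightarrow> 'k) \<Rightarrow> 'b \<Rightarrow> 'k"
  munit :: "'b \<Rightarrow> 'k"
  comult :: "'a set \<Rightarrow> 'a set \<Rightarrow> ('b \<Rightarrow> 'k) \<Rightarrow> 'b \<times> 'b \<Rightarrow> 'k"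
  ccounit :: "('b \<Rightarrow> 'k) \<Rightarrow> 'k"

definition relab :: "('a, 'b, 'k::comm_monoid_add) lspecies \<Rightarrow> ('a \<Rightarrow> 'a) \<Rightarrow> 'a set \<Rightarrow> ('b \<Rightarrow> 'k) \<Rightarrow> 'b \<Rightarrow> 'k" where
  "relab H \<sigma> I f = linrel (\<lambda>x y. y = act H \<sigma> I x) f"

definition species_iso :: "('a, 'b, 'k::comm_ring_1) lspecies \<Rightarrow> ('a, 'c, 'k) lspecies
    \<Rightarrow> ('a set \<Rightarrow> ('b \<Rightarrow> 'k) \<Rightarrow> ('c \<Rightarrow> 'k)) \<Rightarrow> bool" where
  "species_iso H K \<phi> \<longleftrightarrow>
     (\<forall>I. finite I \<longrightarrow> lin_iso (fspace (basis H I)) (fspace (basis K I)) (\<phi> I))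
   \<and> (\<forall>I J \<sigma> f. finite I \<longrightarrow> bij_betw \<sigma> I J \<longrightarrow> f \<in> fspace (basis H I) \<longrightarrow>
        \<phi> J (relab H \<sigma> I f) = relab K \<sigma> I (\<phi> I f))"

definition monoid_morph :: "('a, 'b, 'k::comm_ring_1) lspecies \<Rightarrow> ('a, 'c, 'k) lspecies
    \<Rightarrow> ('a set \<Rightarrow> ('b \<Rightarrow> 'k) \<Rightarrow> ('c \<Rightarrow> 'k)) \<Rightarrow> bool" where
  "monoid_morph H K \<phi> \<longleftrightarrow>
     (\<forall>S T F. finite S \<longrightarrow> finite T \<longrightarrow> S \<inter> T = {} \<longrightarrow> F \<in> fspace (basis H S \<times> basis H T) \<longrightarrow>
        \<phi> (S \<union> T) (mult H S T F) = mult K S T (tensor_map (\<phi> S) (\<phi> T) F))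
   \<and> \<phi> {} (munit H) = munit K"

definition comonoid_morph :: "('a, 'b, 'k::comm_ring_1) lspecies \<Rightarrow> ('a, 'c, 'k) lspecies
    \<Rightarrow> ('a set \<Rightarrow> ('b \<Rightarrow> 'k) \<Rightarrow> ('c \<Rightarrow> 'k)) \<Rightarrow> bool" where
  "comonoid_morph H K \<phi> \<longleftrightarrow>
     (\<forall>S T f. finite S \<longrightarrow> finite T \<longrightarrow> S \<inter> T = {} \<longrightarrow> f \<in> fspace (basis H (S \<union> T)) \<longrightarrow>
        comult K S T (\<phi> (S \<union> T) f) = tensor_map (\<phi> S) (\<phi> T) (comult H S T f))
   \<and> (\<forall>f\<in>fspace (basis H {}). ccounit K (\<phi> {} f) = ccounit H f)"

text \<open>Linear dual of a species with finite bases, written in the dual basis: a functional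
  h is represented by its values on the basis.  Product is \<Delta>*, coproduct is m*,
  unit is the counit \<epsilon>, counit is evaluation at the unit.  The dual action
  h \<mapsto> h o inverse(sigma) sends dual basis vectors to dual basis vectors along the same action.\<close>
definition lin_dual :: "('a, 'b, 'k::comm_ring_1) lspecies \<Rightarrow> ('a, 'b, 'k) lspecies" where
  "lin_dual H = \<lparr> basis = basis H, act = act H,
     mult = (\<lambda>S T F x. if x \<in> basis H (S \<union> T)
                 then (\<Sum>p\<in>basis H S \<times> basis H T. F p * comult H S T (delta x) p) else 0),
     munit = (\<lambda>x. if x \<in> basis H {} then ccounit H (delta x) else 0),
     comult = (\<lambda>S T h p. if p \<in> basis H S \<times> basis H T
                 then (\<Sum>y\<in>basis H (S \<union> T). h y * mult H S T (delta p) y) else 0),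
     ccounit = (\<lambda>h. \<Sum>y\<in>basis H {}. h y * munit H y) \<rparr>"

definition SC :: "'a set \<Rightarrow> 'a set set set" where
  "SC I = {\<Gamma>. \<Gamma> \<subseteq> Pow I \<and> {} \<in> \<Gamma> \<and> (\<forall>X\<in>\<Gamma>. \<forall>Y. Y \<subseteq> X \<longrightarrow> Y \<in> \<Gamma>)}"

definition kSC :: "('a, 'a set set, 'k::comm_ring_1) lspecies" where
  "kSC = \<lparr> basis = SC, act = (\<lambda>\<sigma> I \<Gamma>. (\<lambda>X. \<sigma> ` X) ` \<Gamma>),
     mult = (\<lambda>S T. linrel (\<lambda>p \<Gamma>. \<Gamma> = fst p \<union> snd p)),
     munit = delta {{}},
     comult = (\<lambda>S T. linrel (\<lambda>\<Gamma> p. p = (\<Gamma> \<inter> Pow S, \<Gamma> \<inter> Pow T))),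
     ccounit = (\<lambda>f. f {{}}) \<rparr>"

text \<open>A set species q with elements encoded as natural numbers (no loss, since
  a species relevant here has finite, hence countable, components);
  qact \<sigma> A transports q[A] to q[\<sigma> ` A].\<close>
definition set_species :: "('a set \<Rightarrow> nat set) \<Rightarrow> (('a \<Rightarrow> 'a) \<Rightarrow> 'a set \<Rightarrow> nat \<Rightarrow> nat) \<Rightarrow> bool" where
  "set_species q qact \<longleftrightarrow>
     (\<forall>A B \<sigma> x. finite A \<longrightarrow> bij_betw \<sigma> A B \<longrightarrow> x \<in> q A \<longrightarrow> qact \<sigma> A x \<in> q B)
   \<and> (\<forall>A \<sigma> x. finite A \<longrightarrow> (\<forall>a\<in>A. \<sigma> a = a) \<longrightarrow> x \<in> q A \<longrightarrow> qact \<sigma> A x = x)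
   \<and> (\<forall>A \<sigma> \<tau> x. finite A \<longrightarrow> (\<forall>a\<in>A. \<sigma> a = \<tau> a) \<longrightarrow> x \<in> q A \<longrightarrow> qact \<sigma> A x = qact \<tau> A x)
   \<and> (\<forall>A B \<sigma> \<tau> x. finite A \<longrightarrow> bij_betw \<sigma> A B \<longrightarrow> x \<in> q A \<longrightarrow>
        qact (\<tau> \<circ> \<sigma>) A x = qact \<tau> B (qact \<sigma> A x))"

text \<open>Basis of S(q)[I]: sets of pairs (block, structure) whose blocks form a set
  partition of I into nonempty blocks, each block occurring once.\<close>
definition Sq_basis :: "('a set \<Rightarrow> nat set) \<Rightarrow> 'a set \<Rightarrow> ('a set \<times> nat) set set" where
  "Sq_basis q I = {X. partition_on I (fst ` X) \<and> inj_on fst X \<and> (\<forall>p\<in>X. snd p \<in> q (fst p))}"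

definition Sq :: "('a set \<Rightarrow> nat set) \<Rightarrow> (('a \<Rightarrow> 'a) \<Rightarrow> 'a set \<Rightarrow> nat \<Rightarrow> nat)
    \<Rightarrow> ('a, ('a set \<times> nat) set, 'k::comm_ring_1) lspecies" where
  "Sq q qact = \<lparr> basis = Sq_basis q,
     act = (\<lambda>\<sigma> I X. (\<lambda>p. (\<sigma> ` fst p, qact \<sigma> (fst p) (snd p))) ` X),
     mult = (\<lambda>S T. linrel (\<lambda>p X. X = fst p \<union> snd p)),
     munit = delta {},
     comult = (\<lambda>S T. linrel (\<lambda>X p. (\<forall>A\<in>fst ` X. A \<subseteq> S \<or> A \<subseteq> T)
                 \<and> p = ({r\<in>X. fst r \<subseteq> S}, {r\<in>X. fst r \<subseteq> T}))),
     ccounit = (\<lambda>f. f {}) \<rparr>"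

end

theory Submission
  imports Defs
begin

definition lin :: "('b \<Rightarrow> 'c \<Rightarrow> 'k::comm_ring_1) \<Rightarrow> ('b \<Rightarrow> 'k) \<Rightarrow> 'c \<Rightarrow> 'k" where
  "lin a f = (\<lambda>y. \<Sum>x\<in>supp f. f x * a x y)"

lemma lin_eq_sum:
  assumes "finite A" "supp f \<subseteq> A"
  shows "lin a f y = (\<Sum>x\<in>A. f x * a x y)"
  unfolding lin_def
  by (rule sum.mono_neutral_left) (use assms in \<open>auto simp: supp_def\<close>)

lemma lin_cong: "(\<And>x. x \<in> supp f \<Longrightarrow> a x = b x) \<Longrightarrow> lin a f = lin b f"
  unfolding lin_def by auto

lemma supp_delta[simp]: "supp (delta x :: 'b \<Rightarrow> 'k::{zero_neq_one}) = {x}"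
  by (auto simp: supp_def delta_def)

lemma lin_delta[simp]: "lin a (delta x :: 'b \<Rightarrow> 'k::comm_ring_1) = a x"
  unfolding lin_def supp_delta by (rule ext) (simp add: delta_def)

lemma supp_lin: "supp (lin a f) \<subseteq> (\<Union>x\<in>supp f. supp (a x))"
proof
  fix y assume "y \<in> supp (lin a f)"
  then have "(\<Sum>x\<in>supp f. f x * a x y) \<noteq> 0" by (simp add: supp_def lin_def)
  then obtain x where "x \<in> supp f" "f x * a x y \<noteq> 0" by (meson sum.neutral)
  then show "y \<in> (\<Union>x\<in>supp f. supp (a x))" by (auto simp: supp_def)
qed

lemma lin_comp:
  assumes "finite (supp f)" "finite Y" "\<And>x. x \<in> supp f \<Longrightarrow> supp (a x) \<subseteq> Y"
  shows "lin b (lin a f) = lin (\<lambda>x z. \<Sum>y\<in>Y. a x y * b y z) f"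
proof (rule ext)
  fix z
  have s: "supp (lin a f) \<subseteq> Y" using supp_lin[of a f] assms(3) by blast
  have "lin b (lin a f) z = (\<Sum>y\<in>Y. lin a f y * b y z)"
    by (rule lin_eq_sum[OF assms(2) s])
  also have "\<dots> = (\<Sum>y\<in>Y. \<Sum>x\<in>supp f. f x * a x y * b y z)"
    by (simp add: lin_def sum_distrib_right)
  also have "\<dots> = (\<Sum>x\<in>supp f. \<Sum>y\<in>Y. f x * a x y * b y z)"
    by (rule sum.swap)
  also have "\<dots> = lin (\<lambda>x z. \<Sum>y\<in>Y. a x y * b y z) f z"
    by (simp add: lin_def sum_distrib_left mult.assoc)
  finally show "lin b (lin a f) z = lin (\<lambda>x z. \<Sum>y\<in>Y. a x y * b y z) f z" .
qed

lemma linrel_lin: "linrel R f = lin (\<lambda>x y. if R x y then 1 else 0) f"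
  unfolding linrel_def lin_def by (rule ext) (rule sum.cong, auto)

lemma tensor_lin:
  "tensor_map (lin a) (lin b) F = lin (\<lambda>p (u,v). a (fst p) u * b (snd p) v) (F :: _ \<Rightarrow> 'k::comm_ring_1)"
  unfolding tensor_map_def lin_delta
  by (rule ext) (auto simp: mult.assoc lin_def)

lemma fspaceD: "f \<in> fspace B \<Longrightarrow> finite (supp f) \<and> supp f \<subseteq> B"
  by (simp add: fspace_def)

lemma lin_add:
  assumes "finite (supp f)" "finite (supp g)"
  shows "lin a (\<lambda>x. f x + g x) = (\<lambda>y. lin a f y + lin a g y)"
proof (rule ext)
  fix y
  let ?A = "supp f \<union> supp g"
  have fin: "finite ?A" using assms by auto
  have s: "supp (\<lambda>x. f x + g x) \<subseteq> ?A" by (auto simp: supp_def)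
  have 1: "lin a (\<lambda>x. f x + g x) y = (\<Sum>x\<in>?A. (f x + g x) * a x y)"
    by (rule lin_eq_sum[OF fin s])
  have 2: "lin a f y = (\<Sum>x\<in>?A. f x * a x y)" by (rule lin_eq_sum[OF fin]) auto
  have 3: "lin a g y = (\<Sum>x\<in>?A. g x * a x y)" by (rule lin_eq_sum[OF fin]) auto
  show "lin a (\<lambda>x. f x + g x) y = lin a f y + lin a g y"
    unfolding 1 2 3 by (simp add: sum.distrib distrib_right)
qed

lemma lin_smult:
  assumes "finite (supp f)"
  shows "lin a (\<lambda>x. c * f x) = (\<lambda>y. c * lin a f y)"
proof (rule ext)
  fix y
  have s: "supp (\<lambda>x. c * f x) \<subseteq> supp f" by (auto simp: supp_def)
  have 1: "lin a (\<lambda>x. c * f x) y = (\<Sum>x\<in>supp f. (c * f x) * a x y)"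
    by (rule lin_eq_sum[OF assms s])
  show "lin a (\<lambda>x. c * f x) y = c * lin a f y"
    unfolding 1 by (simp add: lin_def sum_distrib_left mult.assoc)
qed

lemma lin_fspace:
  assumes "finite C" "\<And>x. x \<in> B \<Longrightarrow> supp (a x) \<subseteq> C" "f \<in> fspace B"
  shows "lin a f \<in> fspace C"
proof -
  have "supp (lin a f) \<subseteq> C" using supp_lin[of a f] assms(2,3) by (auto simp: fspace_def)
  then show ?thesis using assms(1) finite_subset by (auto simp: fspace_def)
qed

lemma linear_on_lin:
  fixes a :: "'b \<Rightarrow> 'c \<Rightarrow> 'k::comm_ring_1"
  assumes "finite C" "\<And>x. x \<in> B \<Longrightarrow> supp (a x) \<subseteq> C"
  shows "linear_on (fspace B) (fspace C) (lin a)"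
  unfolding linear_on_def
proof (intro conjI ballI allI)
  fix f :: "'b \<Rightarrow> 'k" assume "f \<in> fspace B" then show "lin a f \<in> fspace C" using lin_fspace[of C B a f] assms by blast
next
  fix f g :: "'b \<Rightarrow> 'k" assume "f \<in> fspace B" "g \<in> fspace B"
  then show "lin a (\<lambda>x. f x + g x) = (\<lambda>y. lin a f y + lin a g y)"
    by (intro lin_add) (auto simp: fspace_def)
next
  fix c and f :: "'b \<Rightarrow> 'k" assume "f \<in> fspace B"
  then show "lin a (\<lambda>x. c * f x) = (\<lambda>y. c * lin a f y)"
    by (intro lin_smult) (auto simp: fspace_def)
qed

lemma lin_zero[simp]: "lin a (\<lambda>x. 0) = (\<lambda>y. 0)"
  by (simp add: lin_def supp_def)

lemma tri_inj:
  fixes a :: "'b \<Rightarrow> 'b \<Rightarrow> 'k::field" and rk :: "'b \<Rightarrow> nat"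
  assumes B: "finite B" and diag: "\<forall>x\<in>B. a x x = 1"
    and tri: "\<forall>x\<in>B. \<forall>y. a x y \<noteq> 0 \<longrightarrow> y \<in> B \<and> (y = x \<or> rk y < rk x)"
  shows "inj_on (lin a) (fspace B)"
proof (rule inj_onI)
  fix f g :: "'b \<Rightarrow> 'k" assume f: "f \<in> fspace B" and g: "g \<in> fspace B" and eq: "lin a f = lin a g"
  define h where "h = (\<lambda>x. f x - g x)"
  have "supp h \<subseteq> supp f \<union> supp g" by (auto simp: h_def supp_def)
  then have sh: "supp h \<subseteq> B" using f g by (auto simp: fspace_def)
  have lh: "(\<Sum>x\<in>B. h x * a x y) = 0" for y
  proof -
    have "lin a f y = (\<Sum>x\<in>B. f x * a x y)" using f B by (intro lin_eq_sum) (auto simp: fspace_def)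
    moreover have "lin a g y = (\<Sum>x\<in>B. g x * a x y)" using g B by (intro lin_eq_sum) (auto simp: fspace_def)
    ultimately show ?thesis using eq by (simp add: h_def left_diff_distrib sum_subtractf)
  qed
  have "supp h = {}"
  proof (rule ccontr)
    assume ne: "supp h \<noteq> {}"
    have fin: "finite (supp h)" using sh B finite_subset by blast
    define m where "m = Max (rk ` supp h)"
    have "m \<in> rk ` supp h" unfolding m_def using fin ne by auto
    then obtain x where x: "x \<in> supp h" "rk x = m" by auto
    have mx: "\<forall>y\<in>supp h. rk y \<le> rk x" using fin x(2) unfolding m_def by auto
    have xB: "x \<in> B" using x sh by auto
    have "(\<Sum>y\<in>B. h y * a y x) = h x * a x x + (\<Sum>y\<in>B - {x}. h y * a y x)"
      using B xB by (simp add: sum.remove)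
    also have "(\<Sum>y\<in>B - {x}. h y * a y x) = 0"
    proof (rule sum.neutral, rule ballI)
      fix y assume y: "y \<in> B - {x}"
      show "h y * a y x = 0"
      proof (cases "h y = 0")
        case False
        then have "y \<in> supp h" by (simp add: supp_def)
        then have "rk y \<le> rk x" using mx by auto
        moreover have "a y x \<noteq> 0 \<Longrightarrow> rk x < rk y" using tri y by auto
        ultimately show ?thesis by fastforce
      qed simp
    qed
    finally have "h x = 0" using lh[of x] diag xB by simp
    then show False using x by (simp add: supp_def)
  qed
  then show "f = g" by (auto simp: supp_def h_def)
qed

lemma tri_surj_aux:
  fixes a :: "'b \<Rightarrow> 'b \<Rightarrow> 'k::field" and rk :: "'b \<Rightarrow> nat"
  assumes B: "finite B" and diag: "\<forall>x\<in>B. a x x = 1"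
    and tri: "\<forall>x\<in>B. \<forall>y. a x y \<noteq> 0 \<longrightarrow> y \<in> B \<and> (y = x \<or> rk y < rk x)"
  shows "\<forall>g\<in>fspace B. (\<forall>y\<in>supp g. rk y < n) \<longrightarrow> (\<exists>f\<in>fspace B. lin a f = g)"
proof (induction n)
  case 0
  show ?case
  proof (intro ballI impI)
    fix g :: "'b \<Rightarrow> 'k" assume "g \<in> fspace B" "\<forall>y\<in>supp g. rk y < 0"
    then have "g = (\<lambda>x. 0)" by (auto simp: supp_def)
    moreover have "(\<lambda>x. 0::'k) \<in> fspace B" by (simp add: fspace_def supp_def)
    ultimately show "\<exists>f\<in>fspace B. lin a f = g" by force
  qed
next
  case (Suc n)
  show ?case
  proof (intro ballI impI)
    fix g :: "'b \<Rightarrow> 'k" assume g: "g \<in> fspace B" and gr: "\<forall>y\<in>supp g. rk y < Suc n"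
    define c where "c = (\<lambda>x. if x \<in> B \<and> rk x = n then g x else 0)"
    have "supp c \<subseteq> B" by (auto simp: c_def supp_def)
    then have cB: "c \<in> fspace B" using B finite_subset by (auto simp: fspace_def)
    have sa: "\<And>x. x \<in> B \<Longrightarrow> supp (a x) \<subseteq> B" using tri by (auto simp: supp_def)
    have lc: "lin a c \<in> fspace B" by (rule lin_fspace[OF B sa cB])
    define g' where "g' = (\<lambda>y. g y - lin a c y)"
    have "supp g' \<subseteq> supp g \<union> supp (lin a c)" by (auto simp: g'_def supp_def)
    then have "supp g' \<subseteq> B" using g lc by (auto simp: fspace_def)
    then have g'B: "g' \<in> fspace B" using B finite_subset by (auto simp: fspace_def)
    have lcy: "lin a c y = (\<Sum>x\<in>B. c x * a x y)" for y
      using cB B by (intro lin_eq_sum) (auto simp: fspace_def)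
    have g'r: "\<forall>y\<in>supp g'. rk y < n"
    proof (rule ballI, rule ccontr)
      fix y assume y: "y \<in> supp g'" and ny: "\<not> rk y < n"
      have "g' y = 0"
      proof (cases "y \<in> B")
        case False
        then have "g y = 0" using g by (auto simp: fspace_def supp_def)
        moreover have "lin a c y = 0" using lc False by (auto simp: fspace_def supp_def)
        ultimately show ?thesis by (simp add: g'_def)
      next
        case yB: True
        show ?thesis
        proof (cases "rk y = n")
          case True
          have "(\<Sum>x\<in>B. c x * a x y) = c y * a y y + (\<Sum>x\<in>B - {y}. c x * a x y)"
            using B yB by (simp add: sum.remove)
          also have "(\<Sum>x\<in>B - {y}. c x * a x y) = 0"
          proof (rule sum.neutral, rule ballI)
            fix x assume x: "x \<in> B - {y}"
            show "c x * a x y = 0"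
            proof (cases "a x y = 0")
              case False
              then have "rk y < rk x" using tri x by auto
              then show ?thesis using True by (simp add: c_def)
            qed simp
          qed
          finally show ?thesis using lcy[of y] yB True diag by (simp add: g'_def c_def)
        next
          case False
          then have "rk y > n" using ny by simp
          then have "g y = 0" using gr by (auto simp: supp_def)
          moreover have "(\<Sum>x\<in>B. c x * a x y) = 0"
          proof (rule sum.neutral, rule ballI)
            fix x assume x: "x \<in> B"
            show "c x * a x y = 0"
            proof (cases "a x y = 0 \<or> c x = 0")
              case False
              then have "rk x = n" by (auto simp: c_def split: if_splits)
              moreover have "y = x \<or> rk y < rk x" using tri x False by auto
              ultimately show ?thesis using \<open>rk y > n\<close> by auto
            qed auto
          qed
          ultimately show ?thesis using lcy[of y] by (simp add: g'_def)
        qed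
      qed
      then show False using y by (simp add: supp_def)
    qed
    obtain f' where f': "f' \<in> fspace B" "lin a f' = g'" using Suc.IH g'B g'r by blast
    define f where "f = (\<lambda>x. f' x + c x)"
    have "supp f \<subseteq> supp f' \<union> supp c" by (auto simp: f_def supp_def)
    then have "supp f \<subseteq> B" using f' cB by (auto simp: fspace_def)
    then have "f \<in> fspace B" using B finite_subset by (auto simp: fspace_def)
    moreover have "lin a f = g"
      unfolding f_def using f' cB
      by (subst lin_add) (auto simp: fspace_def g'_def)
    ultimately show "\<exists>f\<in>fspace B. lin a f = g" by blast
  qed
qed

lemma tri_bij:
  fixes a :: "'b \<Rightarrow> 'b \<Rightarrow> 'k::field" and rk :: "'b \<Rightarrow> nat"
  assumes B: "finite B" and diag: "\<forall>x\<in>B. a x x = 1"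
    and tri: "\<forall>x\<in>B. \<forall>y. a x y \<noteq> 0 \<longrightarrow> y \<in> B \<and> (y = x \<or> rk y < rk x)"
  shows "bij_betw (lin a) (fspace B) (fspace B)"
proof -
  have sa: "\<And>x. x \<in> B \<Longrightarrow> supp (a x) \<subseteq> B" using tri by (auto simp: supp_def)
  have "fspace B \<subseteq> lin a ` fspace B"
  proof
    fix g :: "'b \<Rightarrow> 'k" assume g: "g \<in> fspace B"
    have "\<forall>y\<in>supp g. rk y < Suc (Max (rk ` B))"
    proof
      fix y assume "y \<in> supp g"
      then have "y \<in> B" using g by (auto simp: fspace_def)
      then have "rk y \<le> Max (rk ` B)" using B by simp
      then show "rk y < Suc (Max (rk ` B))" by simp
    qed
    then show "g \<in> lin a ` fspace B"
    proof -
      have "\<exists>f\<in>fspace B. lin a f = g"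
        using tri_surj_aux[OF B diag tri] g \<open>\<forall>y\<in>supp g. rk y < Suc (Max (rk ` B))\<close> by blast
      then show ?thesis by (auto simp: image_def)
    qed
  qed
  moreover have "lin a ` fspace B \<subseteq> fspace B" proof
    fix y assume "y \<in> lin a ` fspace B"
    then obtain f where "f \<in> fspace B" "y = lin a f" by auto
    then show "y \<in> fspace B" using lin_fspace[OF B sa] by simp
  qed
  ultimately have "lin a ` fspace B = fspace B" by blast
  then show ?thesis using tri_inj[OF B diag tri] unfolding bij_betw_def by blast
qed

definition dc :: "'a set set \<Rightarrow> bool" where
  "dc Z \<longleftrightarrow> {} \<in> Z \<and> (\<forall>X\<in>Z. \<forall>Y. Y \<subseteq> X \<longrightarrow> Y \<in> Z)"

lemma SC_dc: "SC I = {\<Gamma>. \<Gamma> \<subseteq> Pow I \<and> dc \<Gamma>}"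
  by (auto simp: SC_def dc_def)

lemma SC_finite: "finite I \<Longrightarrow> finite (SC I)"
  unfolding SC_def by (rule finite_subset[of _ "Pow (Pow I)"]) auto

lemma SC_elem_finite: "finite I \<Longrightarrow> \<Gamma> \<in> SC I \<Longrightarrow> finite \<Gamma>"
  unfolding SC_def by (auto intro: finite_subset[of _ "Pow I"])

definition nsub :: "'a set set \<Rightarrow> nat" where
  "nsub C = card {Z. Z \<subseteq> C \<and> dc Z}"

lemma nsub_union:
  assumes ST: "S \<inter> T = {}" and C1: "C1 \<subseteq> Pow S" "{} \<in> C1" and C2: "C2 \<subseteq> Pow T" "{} \<in> C2"
  shows "nsub (C1 \<union> C2) = nsub C1 * nsub C2"
proof -
  let ?A = "{Z. Z \<subseteq> C1 \<union> C2 \<and> dc Z}"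
  let ?B1 = "{Z. Z \<subseteq> C1 \<and> dc Z}"
  let ?B2 = "{Z. Z \<subseteq> C2 \<and> dc Z}"
  have "bij_betw (\<lambda>Z. (Z \<inter> Pow S, Z \<inter> Pow T)) ?A (?B1 \<times> ?B2)"
  proof (rule bij_betw_byWitness[where f' = "\<lambda>(Z1, Z2). Z1 \<union> Z2"])
    show "\<forall>a\<in>?A. (\<lambda>(Z1, Z2). Z1 \<union> Z2) (a \<inter> Pow S, a \<inter> Pow T) = a"
      using C1 C2 by auto
    show "\<forall>a'\<in>?B1 \<times> ?B2. (\<lambda>Z. (Z \<inter> Pow S, Z \<inter> Pow T)) ((\<lambda>(Z1, Z2). Z1 \<union> Z2) a') = a'"
    proof
      fix p assume p: "p \<in> ?B1 \<times> ?B2"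
      obtain Z1 Z2 where pz: "p = (Z1, Z2)" by (cases p)
      have z1: "Z1 \<subseteq> C1" "{} \<in> Z1" and z2: "Z2 \<subseteq> C2" "{} \<in> Z2" using p pz by (auto simp: dc_def)
      have "(Z1 \<union> Z2) \<inter> Pow S = Z1"
      proof
        show "(Z1 \<union> Z2) \<inter> Pow S \<subseteq> Z1"
        proof
          fix X assume X: "X \<in> (Z1 \<union> Z2) \<inter> Pow S"
          show "X \<in> Z1"
          proof (cases "X \<in> Z1")
            case False
            then have "X \<in> Z2" using X by auto
            then have "X \<subseteq> T" using z2 C2 by auto
            then have "X = {}" using X ST by auto
            then show ?thesis using z1 by simp
          qed
        qed
      next
        show "Z1 \<subseteq> (Z1 \<union> Z2) \<inter> Pow S" using z1 C1 by auto
      qed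
      moreover have "(Z1 \<union> Z2) \<inter> Pow T = Z2"
      proof
        show "(Z1 \<union> Z2) \<inter> Pow T \<subseteq> Z2"
        proof
          fix X assume X: "X \<in> (Z1 \<union> Z2) \<inter> Pow T"
          show "X \<in> Z2"
          proof (cases "X \<in> Z2")
            case False
            then have "X \<in> Z1" using X by auto
            then have "X \<subseteq> S" using z1 C1 by auto
            then have "X = {}" using X ST by auto
            then show ?thesis using z2 by simp
          qed
        qed
      next
        show "Z2 \<subseteq> (Z1 \<union> Z2) \<inter> Pow T" using z2 C2 by auto
      qed
      ultimately show "(\<lambda>Z. (Z \<inter> Pow S, Z \<inter> Pow T)) ((\<lambda>(Z1, Z2). Z1 \<union> Z2) p) = p"
        using pz by simp
    qed
    show "(\<lambda>Z. (Z \<inter> Pow S, Z \<inter> Pow T)) ` ?A \<subseteq> ?B1 \<times> ?B2"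
    proof
      fix q assume "q \<in> (\<lambda>Z. (Z \<inter> Pow S, Z \<inter> Pow T)) ` ?A"
      then obtain Z where Z: "Z \<subseteq> C1 \<union> C2" "dc Z" and q: "q = (Z \<inter> Pow S, Z \<inter> Pow T)" by auto
      have "Z \<inter> Pow S \<subseteq> C1"
      proof
        fix X assume X: "X \<in> Z \<inter> Pow S"
        show "X \<in> C1"
        proof (cases "X \<in> C1")
          case False
          then have "X \<in> C2" using X Z by auto
          then have "X = {}" using X C2 ST by auto
          then show ?thesis using C1 by simp
        qed
      qed
      moreover have "Z \<inter> Pow T \<subseteq> C2"
      proof
        fix X assume X: "X \<in> Z \<inter> Pow T"
        show "X \<in> C2"
        proof (cases "X \<in> C2")
          case False
          then have "X \<in> C1" using X Z by auto
          then have "X = {}" using X C1 ST by auto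
          then show ?thesis using C2 by simp
        qed
      qed
      moreover have "dc (Z \<inter> Pow S)" "dc (Z \<inter> Pow T)" using Z(2) by (auto simp: dc_def)
      ultimately show "q \<in> ?B1 \<times> ?B2" using q by auto
    qed
    show "(\<lambda>(Z1, Z2). Z1 \<union> Z2) ` (?B1 \<times> ?B2) \<subseteq> ?A"
      by (auto simp: dc_def)
  qed
  then have "card ?A = card (?B1 \<times> ?B2)" by (rule bij_betw_same_card)
  then show ?thesis by (simp add: nsub_def card_cartesian_product)
qed

definition rel :: "('a \<Rightarrow> 'a) \<Rightarrow> 'a set set \<Rightarrow> 'a set set" where
  "rel \<sigma> \<Gamma> = (\<lambda>X. \<sigma> ` X) ` \<Gamma>"

lemma act_kSC[simp]: "act kSC = (\<lambda>\<sigma> I. rel \<sigma>)"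
  by (simp add: kSC_def rel_def[abs_def])

lemma basis_kSC[simp]: "basis kSC = SC"
  by (simp add: kSC_def)

lemma rel_inv:
  assumes "bij_betw \<sigma> I J" "\<Gamma> \<subseteq> Pow I"
  shows "rel (inv_into I \<sigma>) (rel \<sigma> \<Gamma>) = \<Gamma>"
proof -
  have "inj_on \<sigma> I" using assms(1) by (simp add: bij_betw_def)
  then have "\<And>X. X \<in> \<Gamma> \<Longrightarrow> inv_into I \<sigma> ` \<sigma> ` X = X"
    using assms(2) by (intro inv_into_image_cancel) auto
  then show ?thesis unfolding rel_def image_image by simp
qed

lemma rel_inv2:
  assumes "bij_betw \<sigma> I J" "\<Gamma> \<subseteq> Pow J"
  shows "rel \<sigma> (rel (inv_into I \<sigma>) \<Gamma>) = \<Gamma>"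
proof -
  have "\<sigma> ` I = J" using assms(1) by (simp add: bij_betw_def)
  then have "\<And>X. X \<in> \<Gamma> \<Longrightarrow> \<sigma> ` inv_into I \<sigma> ` X = X"
    using assms(2) by (intro image_inv_into_cancel) auto
  then show ?thesis unfolding rel_def image_image by simp
qed

lemma rel_Pow: "bij_betw \<sigma> I J \<Longrightarrow> \<Gamma> \<subseteq> Pow I \<Longrightarrow> rel \<sigma> \<Gamma> \<subseteq> Pow J"
  unfolding rel_def bij_betw_def by auto

lemma rel_dc:
  assumes bij: "bij_betw \<sigma> I J" and G: "\<Gamma> \<subseteq> Pow I" "dc \<Gamma>"
  shows "dc (rel \<sigma> \<Gamma>)"
  unfolding dc_def
proof (intro conjI ballI allI impI)
  show "{} \<in> rel \<sigma> \<Gamma>" using G by (force simp: rel_def dc_def)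
next
  fix X Y assume X: "X \<in> rel \<sigma> \<Gamma>" and Y: "Y \<subseteq> X"
  obtain X0 where X0: "X0 \<in> \<Gamma>" "X = \<sigma> ` X0" using X by (auto simp: rel_def)
  let ?\<tau> = "inv_into I \<sigma>"
  have XJ: "X \<subseteq> J" using X rel_Pow[OF bij G(1)] by auto
  have "?\<tau> ` Y \<subseteq> ?\<tau> ` X" using Y by auto
  also have "?\<tau> ` X = X0" using X0 G bij by (auto simp: bij_betw_def intro!: inv_into_image_cancel)
  finally have "?\<tau> ` Y \<in> \<Gamma>" using G X0 by (auto simp: dc_def)
  moreover have "\<sigma> ` ?\<tau> ` Y = Y"
    by (rule image_inv_into_cancel[of \<sigma> I J]) (use bij XJ Y in \<open>auto simp: bij_betw_def\<close>)
  ultimately show "Y \<in> rel \<sigma> \<Gamma>" unfolding rel_def by (metis image_eqI)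
qed

lemma rel_SC: "bij_betw \<sigma> I J \<Longrightarrow> \<Gamma> \<in> SC I \<Longrightarrow> rel \<sigma> \<Gamma> \<in> SC J"
  unfolding SC_dc using rel_dc[of \<sigma> I J \<Gamma>] rel_Pow[of \<sigma> I J \<Gamma>] by simp

lemma rel_bij_SC:
  assumes bij: "bij_betw \<sigma> I J"
  shows "bij_betw (rel \<sigma>) (SC I) (SC J)"
proof (rule bij_betw_byWitness[where f' = "rel (inv_into I \<sigma>)"])
  have bij': "bij_betw (inv_into I \<sigma>) J I" by (rule bij_betw_inv_into[OF bij])
  show "\<forall>a\<in>SC I. rel (inv_into I \<sigma>) (rel \<sigma> a) = a" using rel_inv[OF bij] by (auto simp: SC_def)
  show "\<forall>a'\<in>SC J. rel \<sigma> (rel (inv_into I \<sigma>) a') = a'" using rel_inv2[OF bij] by (auto simp: SC_def)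
  show "rel \<sigma> ` SC I \<subseteq> SC J" using rel_SC[OF bij] by auto
  show "rel (inv_into I \<sigma>) ` SC J \<subseteq> SC I" using rel_SC[OF bij'] by auto
qed

lemma rel_Int:
  assumes bij: "bij_betw \<sigma> I J" and "A \<subseteq> Pow I" "B \<subseteq> Pow I"
  shows "rel \<sigma> (A \<inter> B) = rel \<sigma> A \<inter> rel \<sigma> B"
proof -
  have "inj_on \<sigma> I" using bij by (simp add: bij_betw_def)
  then have "inj_on (\<lambda>X. \<sigma> ` X) (Pow I)"
    by (metis PowD inj_on_def inj_on_image_eq_iff)
  then show ?thesis unfolding rel_def using assms(2,3) by (intro inj_on_image_Int) auto
qed

lemma nsub_rel:
  assumes bij: "bij_betw \<sigma> I J" and C: "C \<subseteq> Pow I"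
  shows "nsub (rel \<sigma> C) = nsub C"
proof -
  let ?\<tau> = "inv_into I \<sigma>"
  have bij': "bij_betw ?\<tau> J I" by (rule bij_betw_inv_into[OF bij])
  have "bij_betw (rel \<sigma>) {Z. Z \<subseteq> C \<and> dc Z} {Z. Z \<subseteq> rel \<sigma> C \<and> dc Z}"
  proof (rule bij_betw_byWitness[where f' = "rel ?\<tau>"])
    show "\<forall>a\<in>{Z. Z \<subseteq> C \<and> dc Z}. rel ?\<tau> (rel \<sigma> a) = a"
      using rel_inv[OF bij] C by auto
    have rc: "rel \<sigma> C \<subseteq> Pow J" by (rule rel_Pow[OF bij C])
    show "\<forall>a'\<in>{Z. Z \<subseteq> rel \<sigma> C \<and> dc Z}. rel \<sigma> (rel ?\<tau> a') = a'"
      using rel_inv2[OF bij] rc by auto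
    show "rel \<sigma> ` {Z. Z \<subseteq> C \<and> dc Z} \<subseteq> {Z. Z \<subseteq> rel \<sigma> C \<and> dc Z}"
    proof
      fix Y assume "Y \<in> rel \<sigma> ` {Z. Z \<subseteq> C \<and> dc Z}"
      then obtain Z where Z: "Z \<subseteq> C" "dc Z" "Y = rel \<sigma> Z" by auto
      have "rel \<sigma> Z \<subseteq> rel \<sigma> C" using Z by (auto simp: rel_def)
      moreover have "dc (rel \<sigma> Z)" using rel_dc[OF bij] Z C by blast
      ultimately show "Y \<in> {Z. Z \<subseteq> rel \<sigma> C \<and> dc Z}" using Z by simp
    qed
    show "rel ?\<tau> ` {Z. Z \<subseteq> rel \<sigma> C \<and> dc Z} \<subseteq> {Z. Z \<subseteq> C \<and> dc Z}"
    proof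
      fix Y assume "Y \<in> rel ?\<tau> ` {Z. Z \<subseteq> rel \<sigma> C \<and> dc Z}"
      then obtain Z where Z: "Z \<subseteq> rel \<sigma> C" "dc Z" "Y = rel ?\<tau> Z" by auto
      have "rel ?\<tau> Z \<subseteq> rel ?\<tau> (rel \<sigma> C)" using Z by (auto simp: rel_def)
      also have "\<dots> = C" using rel_inv[OF bij C] .
      finally have "rel ?\<tau> Z \<subseteq> C" .
      moreover have "dc (rel ?\<tau> Z)" using rel_dc[OF bij'] Z rc by blast
      ultimately show "Y \<in> {Z. Z \<subseteq> C \<and> dc Z}" using Z by simp
    qed
  qed
  then show ?thesis unfolding nsub_def by (metis bij_betw_same_card)
qed

lemma SC_empty: "SC {} = {{{}}}"
  by (auto simp: SC_def)

lemma nsub_unit: "nsub {{}} = 1"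
proof -
  have e: "{Z. Z \<subseteq> {{}} \<and> dc Z} = {{{}}}" by (auto simp: dc_def)
  show ?thesis unfolding nsub_def e by simp
qed

lemma sum_indicator_card:
  assumes "finite A"
  shows "(\<Sum>x\<in>A. if P x then 1 else 0) = (of_nat (card {x\<in>A. P x}) :: 'k::comm_semiring_1)"
proof -
  have "of_nat (card {x\<in>A. P x}) = (\<Sum>x\<in>{x\<in>A. P x}. (1::'k))" by simp
  also have "\<dots> = (\<Sum>x\<in>A. if P x then 1 else 0)" by (rule sum.inter_filter[OF assms])
  finally show ?thesis by simp
qed

definition thmx :: "'a set \<Rightarrow> 'a set set \<Rightarrow> 'a set set \<Rightarrow> 'k::comm_ring_1" where
  "thmx I \<Gamma> \<Delta> = (if \<Delta> \<in> SC I then of_nat (nsub (\<Gamma> \<inter> \<Delta>)) else 0)"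

definition theta :: "'a set \<Rightarrow> ('a set set \<Rightarrow> 'k::comm_ring_1) \<Rightarrow> 'a set set \<Rightarrow> 'k" where
  "theta I = lin (thmx I)"

definition z1 :: "'a set \<Rightarrow> 'a set set \<Rightarrow> 'a set set \<Rightarrow> 'k::comm_ring_1" where
  "z1 I \<Gamma> Z = (if Z \<in> SC I \<and> Z \<subseteq> \<Gamma> then 1 else 0)"

definition z2 :: "'a set \<Rightarrow> 'a set set \<Rightarrow> 'a set set \<Rightarrow> 'k::comm_ring_1" where
  "z2 I Z \<Delta> = (if \<Delta> \<in> SC I \<and> Z \<subseteq> \<Delta> then 1 else 0)"

lemma supp_thm: "supp (thmx I \<Gamma>) \<subseteq> SC I"
  by (auto simp: supp_def thmx_def)

lemma theta_factor:
  assumes I: "finite I" and f: "f \<in> fspace (SC I)"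
  shows "theta I f = lin (z2 I) (lin (z1 I) f :: _ \<Rightarrow> 'k::comm_ring_1)"
proof -
  have "lin (z2 I) (lin (z1 I) f) = lin (\<lambda>x z. \<Sum>y\<in>SC I. z1 I x y * z2 I y z) f"
    using f SC_finite[OF I] by (intro lin_comp) (auto simp: fspace_def supp_def z1_def)
  also have "\<dots> = lin (thmx I) f"
  proof (rule lin_cong)
    fix \<Gamma> assume "\<Gamma> \<in> supp f"
    then have "\<Gamma> \<in> SC I" using f by (auto simp: fspace_def)
    then have G: "\<Gamma> \<subseteq> Pow I" by (simp add: SC_def)
    have eq: "(\<Sum>y\<in>SC I. z1 I \<Gamma> y * z2 I y \<Delta>) = (thmx I \<Gamma> \<Delta> :: 'k)" for \<Delta>
    proof -
      have "(\<Sum>y\<in>SC I. z1 I \<Gamma> y * z2 I y \<Delta>) = (\<Sum>y\<in>SC I. if y \<subseteq> \<Gamma> \<inter> \<Delta> \<and> \<Delta> \<in> SC I then 1 else (0::'k))"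
        by (rule sum.cong) (auto simp: z1_def z2_def)
      also have "\<dots> = of_nat (card {y\<in>SC I. y \<subseteq> \<Gamma> \<inter> \<Delta> \<and> \<Delta> \<in> SC I})"
        by (rule sum_indicator_card[OF SC_finite[OF I]])
      also have "\<dots> = thmx I \<Gamma> \<Delta>"
      proof (cases "\<Delta> \<in> SC I")
        case True
        have "{y\<in>SC I. y \<subseteq> \<Gamma> \<inter> \<Delta> \<and> \<Delta> \<in> SC I} = {Z. Z \<subseteq> \<Gamma> \<inter> \<Delta> \<and> dc Z}"
          using True G by (auto simp: SC_dc)
        then show ?thesis using True by (simp add: thmx_def nsub_def)
      qed (simp add: thmx_def)
      finally show ?thesis .
    qed
    then show "(\<lambda>z. \<Sum>y\<in>SC I. z1 I \<Gamma> y * z2 I y z) = (thmx I \<Gamma> :: _ \<Rightarrow> 'k)" by (intro ext) simp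
  qed
  finally show ?thesis by (simp add: theta_def)
qed

lemma SC_card_le: "finite I \<Longrightarrow> \<Gamma> \<in> SC I \<Longrightarrow> card \<Gamma> \<le> card (Pow I)"
  by (rule card_mono) (auto simp: SC_def)

lemma theta_bij:
  assumes I: "finite I"
  shows "bij_betw (theta I :: _ \<Rightarrow> _ \<Rightarrow> 'k::field) (fspace (SC I)) (fspace (SC I))"
proof -
  have b1: "bij_betw (lin (z1 I) :: _ \<Rightarrow> _ \<Rightarrow> 'k) (fspace (SC I)) (fspace (SC I))"
  proof (rule tri_bij[where rk = card])
    show "finite (SC I)" by (rule SC_finite[OF I])
    show "\<forall>x\<in>SC I. z1 I x x = (1::'k)" by (simp add: z1_def)
    show "\<forall>x\<in>SC I. \<forall>y. z1 I x y \<noteq> (0::'k) \<longrightarrow> y \<in> SC I \<and> (y = x \<or> card y < card x)"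
    proof (intro ballI allI impI)
      fix x y assume x: "x \<in> SC I" and "z1 I x y \<noteq> (0::'k)"
      then have y: "y \<in> SC I" "y \<subseteq> x" by (auto simp: z1_def split: if_splits)
      have "finite x" using SC_elem_finite[OF I x] .
      then show "y \<in> SC I \<and> (y = x \<or> card y < card x)"
        using y psubset_card_mono[of x y] by auto
    qed
  qed
  have b2: "bij_betw (lin (z2 I) :: _ \<Rightarrow> _ \<Rightarrow> 'k) (fspace (SC I)) (fspace (SC I))"
  proof (rule tri_bij[where rk = "\<lambda>Z. card (Pow I) - card Z"])
    show "finite (SC I)" by (rule SC_finite[OF I])
    show "\<forall>x\<in>SC I. z2 I x x = (1::'k)" by (simp add: z2_def)
    show "\<forall>x\<in>SC I. \<forall>y. z2 I x y \<noteq> (0::'k) \<longrightarrow> y \<in> SC I \<and> (y = x \<or> card (Pow I) - card y < card (Pow I) - card x)"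
    proof (intro ballI allI impI)
      fix x y assume x: "x \<in> SC I" and "z2 I x y \<noteq> (0::'k)"
      then have y: "y \<in> SC I" "x \<subseteq> y" by (auto simp: z2_def split: if_splits)
      have "finite y" using SC_elem_finite[OF I y(1)] .
      moreover have "card y \<le> card (Pow I)" using SC_card_le[OF I y(1)] .
      ultimately have "y = x \<or> card (Pow I) - card y < card (Pow I) - card x"
      proof (cases "y = x")
        case False
        then have "card x < card y" using y \<open>finite y\<close> psubset_card_mono[of y x] by auto
        then show ?thesis using \<open>card y \<le> card (Pow I)\<close> by linarith
      qed simp
      then show "y \<in> SC I \<and> (y = x \<or> card (Pow I) - card y < card (Pow I) - card x)"
        using y by simp
    qed
  qed
  have "bij_betw (\<lambda>f. lin (z2 I) (lin (z1 I) f) :: _ \<Rightarrow> 'k) (fspace (SC I)) (fspace (SC I))"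
    using bij_betw_trans[OF b1 b2] by (simp add: comp_def)
  moreover have "bij_betw (theta I :: _ \<Rightarrow> _ \<Rightarrow> 'k) (fspace (SC I)) (fspace (SC I)) \<longleftrightarrow>
      bij_betw (\<lambda>f. lin (z2 I) (lin (z1 I) f) :: _ \<Rightarrow> 'k) (fspace (SC I)) (fspace (SC I))"
    by (rule bij_betw_cong) (rule theta_factor[OF I])
  ultimately show ?thesis by simp
qed

lemma theta_lin_iso:
  assumes I: "finite I"
  shows "lin_iso (fspace (SC I)) (fspace (SC I)) (theta I :: _ \<Rightarrow> _ \<Rightarrow> 'k::field)"
proof -
  have "linear_on (fspace (SC I)) (fspace (SC I)) (lin (thmx I) :: _ \<Rightarrow> _ \<Rightarrow> 'k)"
    by (rule linear_on_lin[OF SC_finite[OF I]]) (rule supp_thm)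
  then show ?thesis unfolding lin_iso_def using theta_bij[OF I] by (simp add: theta_def)
qed

lemma sum_single:
  assumes "finite A" "a \<in> A" "\<And>y. y \<in> A \<Longrightarrow> P y \<longleftrightarrow> y = a"
  shows "(\<Sum>y\<in>A. if P y then g y else 0) = (g a :: 'k::comm_monoid_add)"
proof -
  have "(\<Sum>y\<in>A. if P y then g y else 0) = (\<Sum>y\<in>A. if y = a then g y else 0)"
    using assms(3) by (intro sum.cong) auto
  also have "\<dots> = g a" using assms(1,2) by (simp add: sum.delta')
  finally show ?thesis .
qed

lemma relab_lin: "relab H \<sigma> I f = lin (\<lambda>x y. if y = act H \<sigma> I x then 1 else 0) f"
  unfolding relab_def by (rule linrel_lin)

lemma act_dual[simp]: "act (lin_dual H) = act H" and basis_dual[simp]: "basis (lin_dual H) = basis H"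
  by (simp_all add: lin_dual_def)

lemma theta_nat:
  assumes I: "finite I" and bij: "bij_betw \<sigma> I J" and f: "f \<in> fspace (SC I)"
  shows "theta J (relab kSC \<sigma> I f) = relab (lin_dual kSC) \<sigma> I (theta I f :: _ \<Rightarrow> 'k::comm_ring_1)"
proof -
  have J: "finite J" using bij I bij_betw_finite by blast
  let ?r = "\<lambda>x y. if y = rel \<sigma> x then 1 else (0::'k)"
  have L: "theta J (relab kSC \<sigma> I f) = lin (\<lambda>x z. \<Sum>y\<in>SC J. ?r x y * thmx J y z) f"
    unfolding theta_def relab_lin act_kSC
  proof (rule lin_comp)
    show "finite (supp f)" using f by (simp add: fspace_def)
    show "finite (SC J)" by (rule SC_finite[OF J])
    fix x assume "x \<in> supp f"
    then have "x \<in> SC I" using f by (auto simp: fspace_def)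
    then have "rel \<sigma> x \<in> SC J" by (rule rel_SC[OF bij])
    then show "supp (?r x) \<subseteq> SC J" by (auto simp: supp_def)
  qed
  have R: "relab (lin_dual kSC) \<sigma> I (theta I f) = lin (\<lambda>x z. \<Sum>y\<in>SC I. thmx I x y * ?r y z) f"
    unfolding theta_def relab_lin act_dual act_kSC
    by (rule lin_comp) (use f SC_finite[OF I] supp_thm in \<open>auto simp: fspace_def\<close>)
  have "lin (\<lambda>x z. \<Sum>y\<in>SC J. ?r x y * thmx J y z) f = lin (\<lambda>x z. \<Sum>y\<in>SC I. thmx I x y * ?r y z) f"
  proof (rule lin_cong, rule ext)
    fix x z assume "x \<in> supp f"
    then have x: "x \<in> SC I" using f by (auto simp: fspace_def)
    have xJ: "rel \<sigma> x \<in> SC J" by (rule rel_SC[OF bij x])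
    have "(\<Sum>y\<in>SC J. ?r x y * thmx J y z) = (\<Sum>y\<in>SC J. if y = rel \<sigma> x then thmx J y z else 0)"
      by (rule sum.cong) auto
    also have "\<dots> = thmx J (rel \<sigma> x) z" by (rule sum_single[OF SC_finite[OF J] xJ]) simp
    finally have lhs: "(\<Sum>y\<in>SC J. ?r x y * thmx J y z) = thmx J (rel \<sigma> x) z" .
    show "(\<Sum>y\<in>SC J. ?r x y * thmx J y z) = (\<Sum>y\<in>SC I. thmx I x y * ?r y z)"
    proof (cases "z \<in> SC J")
      case True
      let ?\<tau> = "inv_into I \<sigma>"
      have bij': "bij_betw ?\<tau> J I" by (rule bij_betw_inv_into[OF bij])
      define y0 where "y0 = rel ?\<tau> z"
      have y0: "y0 \<in> SC I" unfolding y0_def by (rule rel_SC[OF bij' True])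
      have zP: "z \<subseteq> Pow J" using True by (simp add: SC_def)
      have zy0: "z = rel \<sigma> y0" unfolding y0_def using rel_inv2[OF bij zP] by simp
      have iff: "z = rel \<sigma> y \<longleftrightarrow> y = y0" if "y \<in> SC I" for y
      proof
        assume "z = rel \<sigma> y"
        then have "y0 = rel ?\<tau> (rel \<sigma> y)" by (simp add: y0_def)
        also have "\<dots> = y" using rel_inv[OF bij] that by (simp add: SC_def)
        finally show "y = y0" by simp
      qed (simp add: zy0)
      have "(\<Sum>y\<in>SC I. thmx I x y * ?r y z) = (\<Sum>y\<in>SC I. if z = rel \<sigma> y then thmx I x y else 0)"
        by (rule sum.cong) auto
      also have "\<dots> = thmx I x y0" by (rule sum_single[OF SC_finite[OF I] y0 iff])
      also have "\<dots> = of_nat (nsub (x \<inter> y0))" using y0 by (simp add: thmx_def)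
      also have "nsub (x \<inter> y0) = nsub (rel \<sigma> (x \<inter> y0))"
      proof -
        have "x \<inter> y0 \<subseteq> Pow I" using x by (auto simp: SC_def)
        then show ?thesis using nsub_rel[OF bij, of "x \<inter> y0"] by simp
      qed
      also have "rel \<sigma> (x \<inter> y0) = rel \<sigma> x \<inter> z"
        using rel_Int[OF bij, of x y0] x y0 zy0 by (auto simp: SC_def)
      finally show ?thesis using lhs True by (simp add: thmx_def)
    next
      case False
      have "(\<Sum>y\<in>SC I. thmx I x y * ?r y z) = 0"
      proof (intro sum.neutral ballI)
        fix y assume "y \<in> SC I"
        then have "z \<noteq> rel \<sigma> y" using rel_SC[OF bij] False by metis
        then show "thmx I x y * ?r y z = 0" by simp
      qed
      then show ?thesis using lhs False by (simp add: thmx_def)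
    qed
  qed
  then show ?thesis using L R by simp
qed

lemma mult_kSC: "mult kSC S T = lin (\<lambda>p y. if y = fst p \<union> snd p then 1 else 0)"
  by (rule ext) (simp add: kSC_def linrel_lin)

lemma comult_kSC: "comult kSC S T = lin (\<lambda>\<Gamma> p. if p = (\<Gamma> \<inter> Pow S, \<Gamma> \<inter> Pow T) then 1 else 0)"
  by (rule ext) (simp add: kSC_def linrel_lin)

lemma munit_kSC: "munit kSC = delta {{}}" and ccounit_kSC: "ccounit kSC f = f {{}}"
  by (simp_all add: kSC_def)

lemma SC_union: "p1 \<in> SC S \<Longrightarrow> p2 \<in> SC T \<Longrightarrow> p1 \<union> p2 \<in> SC (S \<union> T)"
  unfolding SC_def by auto

lemma SC_restr: "\<Gamma> \<in> SC U \<Longrightarrow> \<Gamma> \<inter> Pow S \<in> SC S"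
  unfolding SC_def by auto

lemma nsub_split:
  assumes ST: "S \<inter> T = {}" and G1: "\<Gamma>1 \<in> SC S" and G2: "\<Gamma>2 \<in> SC T" and D: "\<Delta> \<in> SC U"
  shows "nsub ((\<Gamma>1 \<union> \<Gamma>2) \<inter> \<Delta>) = nsub (\<Gamma>1 \<inter> (\<Delta> \<inter> Pow S)) * nsub (\<Gamma>2 \<inter> (\<Delta> \<inter> Pow T))"
proof -
  have g1: "\<Gamma>1 \<subseteq> Pow S" "{} \<in> \<Gamma>1" using G1 by (auto simp: SC_def)
  have g2: "\<Gamma>2 \<subseteq> Pow T" "{} \<in> \<Gamma>2" using G2 by (auto simp: SC_def)
  have d: "{} \<in> \<Delta>" using D by (auto simp: SC_def)
  have "(\<Gamma>1 \<union> \<Gamma>2) \<inter> \<Delta> = (\<Gamma>1 \<inter> (\<Delta> \<inter> Pow S)) \<union> (\<Gamma>2 \<inter> (\<Delta> \<inter> Pow T))"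
    using g1(1) g2(1) by blast
  moreover have "nsub ((\<Gamma>1 \<inter> (\<Delta> \<inter> Pow S)) \<union> (\<Gamma>2 \<inter> (\<Delta> \<inter> Pow T))) =
      nsub (\<Gamma>1 \<inter> (\<Delta> \<inter> Pow S)) * nsub (\<Gamma>2 \<inter> (\<Delta> \<inter> Pow T))"
  proof (rule nsub_union[OF ST])
    show "\<Gamma>1 \<inter> (\<Delta> \<inter> Pow S) \<subseteq> Pow S" "\<Gamma>2 \<inter> (\<Delta> \<inter> Pow T) \<subseteq> Pow T" by auto
    show "{} \<in> \<Gamma>1 \<inter> (\<Delta> \<inter> Pow S)" "{} \<in> \<Gamma>2 \<inter> (\<Delta> \<inter> Pow T)" using g1 g2 d by auto
  qed
  ultimately show ?thesis by simp
qed

lemma theta_mult: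
  assumes S: "finite S" and T: "finite T" and ST: "S \<inter> T = {}"
    and F: "F \<in> fspace (SC S \<times> SC T)"
  shows "theta (S \<union> T) (mult kSC S T F) =
         mult (lin_dual kSC) S T (tensor_map (theta S) (theta T) (F :: _ \<Rightarrow> 'k::comm_ring_1))"
proof -
  have U: "finite (S \<union> T)" using S T by simp
  let ?m = "\<lambda>p y. if y = fst p \<union> snd p then 1 else (0::'k)"
  have L: "theta (S \<union> T) (mult kSC S T F) = lin (\<lambda>p z. \<Sum>y\<in>SC (S \<union> T). ?m p y * thmx (S \<union> T) y z) F"
    unfolding theta_def mult_kSC
  proof (rule lin_comp)
    show "finite (supp F)" using F by (simp add: fspace_def)
    show "finite (SC (S \<union> T))" by (rule SC_finite[OF U])
    fix p assume "p \<in> supp F"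
    then have "p \<in> SC S \<times> SC T" using F by (auto simp: fspace_def)
    then have "fst p \<union> snd p \<in> SC (S \<union> T)" using SC_union by (cases p) auto
    then show "supp (?m p) \<subseteq> SC (S \<union> T)" by (auto simp: supp_def)
  qed
  let ?b = "\<lambda>p x. if x \<in> SC (S \<union> T) then thmx S (fst p) (x \<inter> Pow S) * thmx T (snd p) (x \<inter> Pow T) else (0::'k)"
  have R: "mult (lin_dual kSC) S T (tensor_map (theta S) (theta T) F) = lin ?b F"
  proof (rule ext)
    fix x
    let ?G = "tensor_map (theta S) (theta T) F"
    have G: "?G = lin (\<lambda>p (u, v). thmx S (fst p) u * thmx T (snd p) v) F"
      unfolding theta_def by (rule tensor_lin)
    show "mult (lin_dual kSC) S T ?G x = lin ?b F x"
    proof (cases "x \<in> SC (S \<union> T)")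
      case True
      have xs: "(x \<inter> Pow S, x \<inter> Pow T) \<in> SC S \<times> SC T" using True SC_restr by blast
      have "mult (lin_dual kSC) S T ?G x = (\<Sum>q\<in>SC S \<times> SC T. ?G q * comult kSC S T (delta x) q)"
        using True by (simp add: lin_dual_def)
      also have "\<dots> = (\<Sum>q\<in>SC S \<times> SC T. if q = (x \<inter> Pow S, x \<inter> Pow T) then ?G q else 0)"
        unfolding comult_kSC lin_delta by (rule sum.cong) auto
      also have "\<dots> = ?G (x \<inter> Pow S, x \<inter> Pow T)"
        by (rule sum_single) (use S T SC_finite xs in auto)
      also have "\<dots> = lin ?b F x" using True by (simp add: G lin_def)
      finally show ?thesis .
    next
      case False
      then show ?thesis by (simp add: lin_dual_def lin_def)
    qed
  qed
  have "lin (\<lambda>p z. \<Sum>y\<in>SC (S \<union> T). ?m p y * thmx (S \<union> T) y z) F = lin ?b F"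
  proof (rule lin_cong, rule ext)
    fix p z assume "p \<in> supp F"
    then have p: "fst p \<in> SC S" "snd p \<in> SC T" using F by (auto simp: fspace_def)
    have pu: "fst p \<union> snd p \<in> SC (S \<union> T)" using SC_union p by blast
    have "(\<Sum>y\<in>SC (S \<union> T). ?m p y * thmx (S \<union> T) y z) =
          (\<Sum>y\<in>SC (S \<union> T). if y = fst p \<union> snd p then thmx (S \<union> T) y z else 0)"
      by (rule sum.cong) auto
    also have "\<dots> = thmx (S \<union> T) (fst p \<union> snd p) z"
      by (rule sum_single[OF SC_finite[OF U] pu]) simp
    also have "\<dots> = ?b p z"
    proof (cases "z \<in> SC (S \<union> T)")
      case True
      have "z \<inter> Pow S \<in> SC S" "z \<inter> Pow T \<in> SC T" using True SC_restr by blast+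
      then show ?thesis using True nsub_split[OF ST p(1) p(2) True]
        by (simp add: thmx_def)
    qed (simp add: thmx_def)
    finally show "(\<Sum>y\<in>SC (S \<union> T). ?m p y * thmx (S \<union> T) y z) = ?b p z" .
  qed
  then show ?thesis using L R by simp
qed

lemma theta_unit: "theta {} (munit kSC) = (munit (lin_dual kSC) :: _ \<Rightarrow> 'k::comm_ring_1)"
proof (rule ext)
  fix x
  show "theta {} (munit kSC) x = (munit (lin_dual kSC) x :: 'k)"
    unfolding theta_def munit_kSC lin_delta
    by (cases "x = {{}}") (simp_all add: lin_dual_def thmx_def SC_empty nsub_unit ccounit_kSC delta_def)
qed

lemma theta_counit:
  assumes f: "f \<in> fspace (SC {})"
  shows "ccounit (lin_dual kSC) (theta {} f) = ccounit kSC (f :: _ \<Rightarrow> 'k::comm_ring_1)"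
proof -
  have "ccounit (lin_dual kSC) (theta {} f) = theta {} f {{}}"
    by (simp add: lin_dual_def SC_empty munit_kSC delta_def)
  also have "\<dots> = (\<Sum>x\<in>{{{}}}. f x * thmx {} x {{}})"
    unfolding theta_def by (rule lin_eq_sum) (use f in \<open>auto simp: fspace_def SC_empty\<close>)
  also have "\<dots> = f {{}}" by (simp add: thmx_def SC_empty nsub_unit)
  finally show ?thesis by (simp add: ccounit_kSC)
qed

lemma theta_comult:
  assumes S: "finite S" and T: "finite T" and ST: "S \<inter> T = {}"
    and f: "f \<in> fspace (SC (S \<union> T))"
  shows "comult (lin_dual kSC) S T (theta (S \<union> T) f) =
         tensor_map (theta S) (theta T) (comult kSC S T (f :: _ \<Rightarrow> 'k::comm_ring_1))"
proof -
  have U: "finite (S \<union> T)" using S T by simp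
  let ?c = "\<lambda>\<Gamma> p. if p = (\<Gamma> \<inter> Pow S, \<Gamma> \<inter> Pow T) then 1 else (0::'k)"
  let ?t = "\<lambda>q (u, v). thmx S (fst q) u * thmx T (snd q) v :: 'k"
  let ?b = "\<lambda>\<Gamma> p. if p \<in> SC S \<times> SC T then thmx (S \<union> T) \<Gamma> (fst p \<union> snd p) else (0::'k)"
  have L: "comult (lin_dual kSC) S T (theta (S \<union> T) f) = lin ?b f"
  proof (rule ext)
    fix p :: "'a set set \<times> 'a set set"
    show "comult (lin_dual kSC) S T (theta (S \<union> T) f) p = lin ?b f p"
    proof (cases "p \<in> SC S \<times> SC T")
      case True
      have pu: "fst p \<union> snd p \<in> SC (S \<union> T)" using SC_union True by (cases p) auto
      have "comult (lin_dual kSC) S T (theta (S \<union> T) f) p =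
            (\<Sum>y\<in>SC (S \<union> T). theta (S \<union> T) f y * mult kSC S T (delta p) y)"
        using True by (simp add: lin_dual_def)
      also have "\<dots> = (\<Sum>y\<in>SC (S \<union> T). if y = fst p \<union> snd p then theta (S \<union> T) f y else 0)"
        unfolding mult_kSC lin_delta by (rule sum.cong) auto
      also have "\<dots> = theta (S \<union> T) f (fst p \<union> snd p)"
        by (rule sum_single[OF SC_finite[OF U] pu]) simp
      also have "\<dots> = lin ?b f p" using True by (simp add: theta_def lin_def)
      finally show ?thesis .
    next
      case False
      then show ?thesis by (simp add: lin_dual_def lin_def)
    qed
  qed
  have R: "tensor_map (theta S) (theta T) (comult kSC S T f) = lin (\<lambda>\<Gamma> z. \<Sum>q\<in>SC S \<times> SC T. ?c \<Gamma> q * ?t q z) f"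
    unfolding theta_def tensor_lin comult_kSC
  proof (rule lin_comp)
    show "finite (supp f)" using f by (simp add: fspace_def)
    show "finite (SC S \<times> SC T)" using SC_finite S T by blast
    fix \<Gamma> assume "\<Gamma> \<in> supp f"
    then have "\<Gamma> \<in> SC (S \<union> T)" using f by (auto simp: fspace_def)
    then have "(\<Gamma> \<inter> Pow S, \<Gamma> \<inter> Pow T) \<in> SC S \<times> SC T" using SC_restr by blast
    then show "supp (?c \<Gamma>) \<subseteq> SC S \<times> SC T" by (auto simp: supp_def)
  qed
  have "lin ?b f = lin (\<lambda>\<Gamma> z. \<Sum>q\<in>SC S \<times> SC T. ?c \<Gamma> q * ?t q z) f"
  proof (rule lin_cong, rule ext)
    fix \<Gamma> z assume "\<Gamma> \<in> supp f"
    then have G: "\<Gamma> \<in> SC (S \<union> T)" using f by (auto simp: fspace_def)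
    have Gs: "(\<Gamma> \<inter> Pow S, \<Gamma> \<inter> Pow T) \<in> SC S \<times> SC T" using SC_restr G by blast
    have "(\<Sum>q\<in>SC S \<times> SC T. ?c \<Gamma> q * ?t q z) =
          (\<Sum>q\<in>SC S \<times> SC T. if q = (\<Gamma> \<inter> Pow S, \<Gamma> \<inter> Pow T) then ?t q z else 0)"
      by (rule sum.cong) auto
    also have "\<dots> = ?t (\<Gamma> \<inter> Pow S, \<Gamma> \<inter> Pow T) z"
      by (rule sum_single) (use S T SC_finite Gs in auto)
    also have "\<dots> = ?b \<Gamma> z"
    proof (cases "z \<in> SC S \<times> SC T")
      case True
      obtain u v where z: "z = (u, v)" by (cases z)
      have uv: "u \<in> SC S" "v \<in> SC T" using True z by auto
      have "\<Gamma> \<inter> (u \<union> v) = (u \<union> v) \<inter> \<Gamma>" by blast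
      then have "nsub (\<Gamma> \<inter> (u \<union> v)) = nsub (u \<inter> (\<Gamma> \<inter> Pow S)) * nsub (v \<inter> (\<Gamma> \<inter> Pow T))"
        using nsub_split[OF ST uv G] by simp
      moreover have "u \<inter> (\<Gamma> \<inter> Pow S) = \<Gamma> \<inter> Pow S \<inter> u" "v \<inter> (\<Gamma> \<inter> Pow T) = \<Gamma> \<inter> Pow T \<inter> v" by blast+
      moreover have "u \<union> v \<in> SC (S \<union> T)" using SC_union uv by blast
      ultimately show ?thesis using z uv by (simp add: thmx_def)
    next
      case False
      then show ?thesis by (cases z) (auto simp: thmx_def)
    qed
    finally show "?b \<Gamma> z = (\<Sum>q\<in>SC S \<times> SC T. ?c \<Gamma> q * ?t q z)" by simp
  qed
  then show ?thesis using L R by simp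
qed

definition sep :: "'a set \<Rightarrow> 'a set set \<Rightarrow> 'a set \<Rightarrow> bool" where
  "sep I \<Gamma> A \<longleftrightarrow> A \<subseteq> I \<and> (\<forall>F\<in>\<Gamma>. F \<subseteq> A \<or> F \<subseteq> I - A)"

definition blk :: "'a set \<Rightarrow> 'a set set \<Rightarrow> 'a \<Rightarrow> 'a set" where
  "blk I \<Gamma> i = \<Inter>{A. sep I \<Gamma> A \<and> i \<in> A}"

definition blocks :: "'a set \<Rightarrow> 'a set set \<Rightarrow> 'a set set" where
  "blocks I \<Gamma> = blk I \<Gamma> ` I"

definition conn :: "'a set \<Rightarrow> 'a set set \<Rightarrow> bool" where
  "conn A \<Gamma> \<longleftrightarrow> \<Gamma> \<in> SC A \<and> A \<noteq> {} \<and> (\<forall>S. sep A \<Gamma> S \<longrightarrow> S = {} \<or> S = A)"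

lemma sep_I: "\<Gamma> \<subseteq> Pow I \<Longrightarrow> sep I \<Gamma> I"
  by (auto simp: sep_def)

lemma sep_compl: "sep I \<Gamma> A \<Longrightarrow> sep I \<Gamma> (I - A)"
  unfolding sep_def by auto

lemma sep_Inter:
  assumes "\<A> \<noteq> {}" "\<And>A. A \<in> \<A> \<Longrightarrow> sep I \<Gamma> A"
  shows "sep I \<Gamma> (\<Inter>\<A>)"
  unfolding sep_def
proof (intro conjI ballI)
  obtain A0 where "A0 \<in> \<A>" using assms(1) by auto
  then show "\<Inter>\<A> \<subseteq> I" using assms(2)[of A0] by (auto simp: sep_def)
next
  fix F assume F: "F \<in> \<Gamma>"
  show "F \<subseteq> \<Inter>\<A> \<or> F \<subseteq> I - \<Inter>\<A>"
  proof (cases "\<forall>A\<in>\<A>. F \<subseteq> A")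
    case True then show ?thesis by auto
  next
    case False
    then obtain A where A: "A \<in> \<A>" "\<not> F \<subseteq> A" by auto
    then have "F \<subseteq> I - A" using assms(2)[OF A(1)] F by (auto simp: sep_def)
    then show ?thesis using A(1) by auto
  qed
qed

lemma blk_props:
  assumes G: "\<Gamma> \<subseteq> Pow I" and i: "i \<in> I"
  shows "i \<in> blk I \<Gamma> i" "blk I \<Gamma> i \<subseteq> I" "sep I \<Gamma> (blk I \<Gamma> i)"
proof -
  have ne: "{A. sep I \<Gamma> A \<and> i \<in> A} \<noteq> {}" using sep_I[OF G] i by auto
  show "i \<in> blk I \<Gamma> i" by (auto simp: blk_def)
  show s: "sep I \<Gamma> (blk I \<Gamma> i)" unfolding blk_def by (rule sep_Inter[OF ne]) auto
  then show "blk I \<Gamma> i \<subseteq> I" by (simp add: sep_def)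
qed

lemma blk_min: "sep I \<Gamma> A \<Longrightarrow> i \<in> A \<Longrightarrow> blk I \<Gamma> i \<subseteq> A"
  unfolding blk_def by auto

lemma blk_eq:
  assumes G: "\<Gamma> \<subseteq> Pow I" and i: "i \<in> I" and j: "j \<in> blk I \<Gamma> i"
  shows "blk I \<Gamma> j = blk I \<Gamma> i"
proof -
  have jI: "j \<in> I" using blk_props(2)[OF G i] j by auto
  have 1: "blk I \<Gamma> j \<subseteq> blk I \<Gamma> i" by (rule blk_min[OF blk_props(3)[OF G i] j])
  have "i \<in> blk I \<Gamma> j"
  proof (rule ccontr)
    assume "i \<notin> blk I \<Gamma> j"
    then have "i \<in> I - blk I \<Gamma> j" using i by auto
    then have "blk I \<Gamma> i \<subseteq> I - blk I \<Gamma> j"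
      by (rule blk_min[OF sep_compl[OF blk_props(3)[OF G jI]]])
    then show False using j blk_props(1)[OF G jI] by auto
  qed
  then have "blk I \<Gamma> i \<subseteq> blk I \<Gamma> j" by (rule blk_min[OF blk_props(3)[OF G jI]])
  then show ?thesis using 1 by auto
qed

lemma blocks_partition:
  assumes G: "\<Gamma> \<subseteq> Pow I"
  shows "partition_on I (blocks I \<Gamma>)"
proof (rule partition_onI)
  have b1: "\<And>i. i \<in> I \<Longrightarrow> blk I \<Gamma> i \<subseteq> I" and b2: "\<And>i. i \<in> I \<Longrightarrow> i \<in> blk I \<Gamma> i"
    using blk_props[OF G] by auto
  show "\<Union>(blocks I \<Gamma>) = I" unfolding blocks_def using b1 b2 by blast
  show "{} \<notin> blocks I \<Gamma>" unfolding blocks_def using b2 by force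
  fix p q assume p: "p \<in> blocks I \<Gamma>" and q: "q \<in> blocks I \<Gamma>" and pq: "p \<noteq> q"
  obtain i j where i: "i \<in> I" "p = blk I \<Gamma> i" and j: "j \<in> I" "q = blk I \<Gamma> j"
    using p q by (auto simp: blocks_def)
  show "disjnt p q"
  proof (rule ccontr)
    assume "\<not> disjnt p q"
    then obtain k where "k \<in> p" "k \<in> q" by (auto simp: disjnt_def)
    then have "blk I \<Gamma> k = p" "blk I \<Gamma> k = q" using blk_eq[OF G i(1), of k] blk_eq[OF G j(1), of k] i(2) j(2) by simp_all
    then show False using pq by simp
  qed
qed

lemma face_in_blk:
  assumes G: "\<Gamma> \<subseteq> Pow I" and F: "F \<in> \<Gamma>" and i: "i \<in> F"
  shows "F \<subseteq> blk I \<Gamma> i"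
  unfolding blk_def
proof (rule Inter_greatest)
  fix A assume "A \<in> {A. sep I \<Gamma> A \<and> i \<in> A}"
  then have A: "sep I \<Gamma> A" "i \<in> A" by auto
  then have "F \<subseteq> A \<or> F \<subseteq> I - A" using F by (auto simp: sep_def)
  then show "F \<subseteq> A" using A(2) i by auto
qed

lemma SC_decomp:
  assumes G: "\<Gamma> \<in> SC I"
  shows "\<Gamma> = insert {} (\<Union>A\<in>blocks I \<Gamma>. \<Gamma> \<inter> Pow A)"
proof
  have GP: "\<Gamma> \<subseteq> Pow I" using G by (simp add: SC_def)
  show "\<Gamma> \<subseteq> insert {} (\<Union>A\<in>blocks I \<Gamma>. \<Gamma> \<inter> Pow A)"
  proof
    fix F assume F: "F \<in> \<Gamma>"
    show "F \<in> insert {} (\<Union>A\<in>blocks I \<Gamma>. \<Gamma> \<inter> Pow A)"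
    proof (cases "F = {}")
      case False
      then obtain i where i: "i \<in> F" by auto
      then have "i \<in> I" using F GP by auto
      then have "blk I \<Gamma> i \<in> blocks I \<Gamma>" by (simp add: blocks_def)
      moreover have "F \<subseteq> blk I \<Gamma> i" by (rule face_in_blk[OF GP F i])
      ultimately show ?thesis using F by auto
    qed simp
  qed
  have "{} \<in> \<Gamma>" using G by (simp add: SC_def)
  then show "insert {} (\<Union>A\<in>blocks I \<Gamma>. \<Gamma> \<inter> Pow A) \<subseteq> \<Gamma>" by auto
qed

lemma sep_restr:
  assumes "sep I \<Gamma> S" "A \<subseteq> I"
  shows "sep A (\<Gamma> \<inter> Pow A) (S \<inter> A)"
  using assms unfolding sep_def by auto

lemma blocks_conn:
  assumes G: "\<Gamma> \<in> SC I" and A: "A \<in> blocks I \<Gamma>"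
  shows "conn A (\<Gamma> \<inter> Pow A)"
proof -
  have GP: "\<Gamma> \<subseteq> Pow I" using G by (simp add: SC_def)
  obtain i where i: "i \<in> I" "A = blk I \<Gamma> i" using A by (auto simp: blocks_def)
  have iA: "i \<in> A" and AI: "A \<subseteq> I" and sA: "sep I \<Gamma> A" using blk_props[OF GP i(1)] i(2) by auto
  have "\<Gamma> \<inter> Pow A \<in> SC A" by (rule SC_restr[OF G])
  moreover have "A \<noteq> {}" using iA by auto
  moreover have "S = {} \<or> S = A" if S: "sep A (\<Gamma> \<inter> Pow A) S" for S
  proof -
    have SA: "S \<subseteq> A" using S by (simp add: sep_def)
    have sS: "sep I \<Gamma> S"
      unfolding sep_def
    proof (intro conjI ballI)
      show "S \<subseteq> I" using SA AI by auto
      fix F assume F: "F \<in> \<Gamma>"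
      show "F \<subseteq> S \<or> F \<subseteq> I - S"
      proof (cases "F \<subseteq> A")
        case True
        then have "F \<subseteq> S \<or> F \<subseteq> A - S" using S F by (auto simp: sep_def)
        then show ?thesis using AI by auto
      next
        case False
        then have "F \<subseteq> I - A" using sA F by (auto simp: sep_def)
        then show ?thesis using SA by auto
      qed
    qed
    show ?thesis
    proof (cases "i \<in> S")
      case True
      then have "A \<subseteq> S" using blk_min[OF sS] i(2) by simp
      then show ?thesis using SA by auto
    next
      case False
      then have "i \<in> I - S" using i by auto
      then have "A \<subseteq> I - S" using blk_min[OF sep_compl[OF sS]] i(2) by simp
      then show ?thesis using SA by auto
    qed
  qed
  ultimately show ?thesis by (simp add: conn_def)
qed

lemma decomp_char:
  assumes inj: "inj_on Af K" and P: "partition_on I (Af ` K)"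
    and C: "\<And>k. k \<in> K \<Longrightarrow> conn (Af k) (Zf k)"
    and G: "\<Gamma> = insert {} (\<Union>k\<in>K. Zf k)"
  shows "\<Gamma> \<in> SC I" "\<And>k. k \<in> K \<Longrightarrow> \<Gamma> \<inter> Pow (Af k) = Zf k" "blocks I \<Gamma> = Af ` K"
proof -
  have AI: "Af k \<subseteq> I" if "k \<in> K" for k using P that by (auto simp: partition_on_def)
  have Zsc: "Zf k \<in> SC (Af k)" if "k \<in> K" for k using C[OF that] by (simp add: conn_def)
  have dis: "Af k \<inter> Af k' = {}" if "k \<in> K" "k' \<in> K" "k \<noteq> k'" for k k'
  proof -
    have "Af k \<noteq> Af k'" using inj that by (auto simp: inj_on_def)
    then show ?thesis using P that by (auto simp: partition_on_def pairwise_def disjnt_def)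
  qed
  show GS: "\<Gamma> \<in> SC I"
    unfolding SC_def
  proof (intro CollectI conjI ballI allI impI)
    show "\<Gamma> \<subseteq> Pow I"
    proof
      fix X assume "X \<in> \<Gamma>"
      then consider "X = {}" | k where "k \<in> K" "X \<in> Zf k" using G by auto
      then show "X \<in> Pow I"
      proof cases
        case 2 then show ?thesis using Zsc[OF 2(1)] AI[OF 2(1)] by (auto simp: SC_def)
      qed simp
    qed
    show "{} \<in> \<Gamma>" using G by simp
    fix X Y assume X: "X \<in> \<Gamma>" and Y: "Y \<subseteq> X"
    then consider "X = {}" | k where "k \<in> K" "X \<in> Zf k" using G by auto
    then show "Y \<in> \<Gamma>"
    proof cases
      case 1 then show ?thesis using Y G by simp
    next
      case 2
      then have "Y \<in> Zf k" using Zsc[OF 2(1)] Y unfolding SC_def by blast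
      then show ?thesis using G 2(1) by auto
    qed
  qed
  show restr: "\<Gamma> \<inter> Pow (Af k) = Zf k" if k: "k \<in> K" for k
  proof
    show "Zf k \<subseteq> \<Gamma> \<inter> Pow (Af k)" using Zsc[OF k] G k by (auto simp: SC_def)
    show "\<Gamma> \<inter> Pow (Af k) \<subseteq> Zf k"
    proof
      fix X assume X: "X \<in> \<Gamma> \<inter> Pow (Af k)"
      then consider "X = {}" | k' where "k' \<in> K" "X \<in> Zf k'" using G by auto
      then show "X \<in> Zf k"
      proof cases
        case 1 then show ?thesis using Zsc[OF k] by (simp add: SC_def)
      next
        case 2
        show ?thesis
        proof (cases "k' = k")
          case False
          have "X \<subseteq> Af k'" using Zsc[OF 2(1)] 2(2) by (auto simp: SC_def)
          then have "X = {}" using X dis[OF k 2(1)] False by auto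
          then show ?thesis using Zsc[OF k] by (simp add: SC_def)
        qed (use 2 in simp)
      qed
    qed
  qed
  have GP: "\<Gamma> \<subseteq> Pow I" using GS by (simp add: SC_def)
  have sepk: "sep I \<Gamma> (Af k)" if k: "k \<in> K" for k
    unfolding sep_def
  proof (intro conjI ballI)
    show "Af k \<subseteq> I" by (rule AI[OF k])
    fix F assume "F \<in> \<Gamma>"
    then consider "F = {}" | k' where "k' \<in> K" "F \<in> Zf k'" using G by auto
    then show "F \<subseteq> Af k \<or> F \<subseteq> I - Af k"
    proof cases
      case 2
      have F: "F \<subseteq> Af k'" using Zsc[OF 2(1)] 2(2) by (auto simp: SC_def)
      show ?thesis
      proof (cases "k' = k")
        case False
        then show ?thesis using F dis[OF k 2(1)] AI[OF 2(1)] by auto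
      qed (use F in simp)
    qed simp
  qed
  have blk_k: "blk I \<Gamma> i = Af k" if k: "k \<in> K" and i: "i \<in> Af k" for k i
  proof
    show "blk I \<Gamma> i \<subseteq> Af k" by (rule blk_min[OF sepk[OF k] i])
    have iI: "i \<in> I" using AI[OF k] i by auto
    have "sep (Af k) (\<Gamma> \<inter> Pow (Af k)) (blk I \<Gamma> i \<inter> Af k)"
      by (rule sep_restr[OF blk_props(3)[OF GP iI] AI[OF k]])
    then have "sep (Af k) (Zf k) (blk I \<Gamma> i \<inter> Af k)" using restr[OF k] by simp
    then have "blk I \<Gamma> i \<inter> Af k = {} \<or> blk I \<Gamma> i \<inter> Af k = Af k" using C[OF k] by (simp add: conn_def)
    moreover have "i \<in> blk I \<Gamma> i \<inter> Af k" using blk_props(1)[OF GP iI] i by simp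
    ultimately show "Af k \<subseteq> blk I \<Gamma> i" by auto
  qed
  show "blocks I \<Gamma> = Af ` K"
  proof
    show "blocks I \<Gamma> \<subseteq> Af ` K"
    proof
      fix B assume "B \<in> blocks I \<Gamma>"
      then obtain i where i: "i \<in> I" "B = blk I \<Gamma> i" by (auto simp: blocks_def)
      then obtain k where k: "k \<in> K" "i \<in> Af k" using P by (auto simp: partition_on_def)
      then show "B \<in> Af ` K" using blk_k i by auto
    qed
    show "Af ` K \<subseteq> blocks I \<Gamma>"
    proof
      fix B assume "B \<in> Af ` K"
      then obtain k where k: "k \<in> K" "B = Af k" by auto
      have "B \<noteq> {}" using P k by (auto simp: partition_on_def)
      then obtain i where i: "i \<in> B" by auto
      then have "i \<in> I" using AI k by auto
      then show "B \<in> blocks I \<Gamma>" using blk_k[OF k(1)] i k by (auto simp: blocks_def)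
    qed
  qed
qed

definition CC :: "'a set \<Rightarrow> 'a set set set" where
  "CC A = {\<Gamma>. conn A \<Gamma>}"

lemma CC_finite: "finite A \<Longrightarrow> finite (CC A)"
  by (rule finite_subset[OF _ SC_finite[of A]]) (auto simp: CC_def conn_def)

definition qq :: "'a set \<Rightarrow> nat set" where
  "qq A = {0..<card (CC A)}"

definition dec :: "'a set \<Rightarrow> nat \<Rightarrow> 'a set set" where
  "dec A = (SOME h. bij_betw h (qq A) (CC A))"

definition enc :: "'a set \<Rightarrow> 'a set set \<Rightarrow> nat" where
  "enc A = inv_into (qq A) (dec A)"

definition qa :: "('a \<Rightarrow> 'a) \<Rightarrow> 'a set \<Rightarrow> nat \<Rightarrow> nat" where
  "qa \<sigma> A x = enc (\<sigma> ` A) (rel \<sigma> (dec A x))"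

lemma dec_bij: "finite A \<Longrightarrow> bij_betw (dec A) (qq A) (CC A)"
proof -
  assume A: "finite A"
  obtain h where "bij_betw h {0..<card (CC A)} (CC A)" using ex_bij_betw_nat_finite[OF CC_finite[OF A]] by blast
  then show ?thesis unfolding dec_def qq_def by (rule someI[of "\<lambda>h. bij_betw h {0..<card (CC A)} (CC A)"])
qed

lemma enc_dec: "finite A \<Longrightarrow> x \<in> qq A \<Longrightarrow> enc A (dec A x) = x"
  unfolding enc_def using dec_bij by (metis bij_betw_inv_into_left)

lemma dec_enc: "finite A \<Longrightarrow> \<Gamma> \<in> CC A \<Longrightarrow> dec A (enc A \<Gamma>) = \<Gamma>"
  unfolding enc_def using dec_bij by (metis bij_betw_inv_into_right)

lemma enc_in: "finite A \<Longrightarrow> \<Gamma> \<in> CC A \<Longrightarrow> enc A \<Gamma> \<in> qq A"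
  unfolding enc_def using dec_bij by (metis bij_betw_def inv_into_into)

lemma dec_in: "finite A \<Longrightarrow> x \<in> qq A \<Longrightarrow> dec A x \<in> CC A"
  using dec_bij by (metis bij_betwE)

lemma qq_empty: "qq {} = {}"
proof -
  have e: "CC {} = {}" by (auto simp: CC_def conn_def)
  show ?thesis unfolding qq_def e by simp
qed

lemma conn_rel:
  assumes bij: "bij_betw \<sigma> A B" and c: "conn A \<Gamma>"
  shows "conn B (rel \<sigma> \<Gamma>)"
proof -
  let ?\<tau> = "inv_into A \<sigma>"
  have G: "\<Gamma> \<in> SC A" and An: "A \<noteq> {}" and cs: "\<And>S. sep A \<Gamma> S \<Longrightarrow> S = {} \<or> S = A"
    using c by (auto simp: conn_def)
  have GP: "\<Gamma> \<subseteq> Pow A" using G by (simp add: SC_def)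
  have sB: "\<sigma> ` A = B" and inj: "inj_on \<sigma> A" using bij by (auto simp: bij_betw_def)
  have "rel \<sigma> \<Gamma> \<in> SC B" by (rule rel_SC[OF bij G])
  moreover have "B \<noteq> {}" using An sB by auto
  moreover have "S = {} \<or> S = B" if S: "sep B (rel \<sigma> \<Gamma>) S" for S
  proof -
    have SB: "S \<subseteq> B" using S by (simp add: sep_def)
    have tS: "?\<tau> ` S \<subseteq> A" using SB sB by (auto intro: inv_into_into)
    have "sep A \<Gamma> (?\<tau> ` S)"
      unfolding sep_def
    proof (intro conjI ballI)
      show "?\<tau> ` S \<subseteq> A" by (rule tS)
      fix F assume F: "F \<in> \<Gamma>"
      have FA: "F \<subseteq> A" using F GP by auto
      have "\<sigma> ` F \<in> rel \<sigma> \<Gamma>" using F by (auto simp: rel_def)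
      then have "\<sigma> ` F \<subseteq> S \<or> \<sigma> ` F \<subseteq> B - S" using S by (auto simp: sep_def)
      then show "F \<subseteq> ?\<tau> ` S \<or> F \<subseteq> A - ?\<tau> ` S"
      proof
        assume h: "\<sigma> ` F \<subseteq> S"
        have "F \<subseteq> ?\<tau> ` S"
        proof
          fix x assume x: "x \<in> F"
          then have "x = ?\<tau> (\<sigma> x)" using FA inj by (simp add: inv_into_f_f subsetD)
          moreover have "\<sigma> x \<in> S" using h x by auto
          ultimately show "x \<in> ?\<tau> ` S" by (rule image_eqI)
        qed
        then show ?thesis by simp
      next
        assume h: "\<sigma> ` F \<subseteq> B - S"
        have "F \<subseteq> A - ?\<tau> ` S"
        proof
          fix x assume x: "x \<in> F"
          have "x \<notin> ?\<tau> ` S"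
          proof
            assume "x \<in> ?\<tau> ` S"
            then obtain s where s: "s \<in> S" "x = ?\<tau> s" by auto
            then have "\<sigma> x = s" using SB sB by (metis f_inv_into_f subsetD)
            then show False using h x s by auto
          qed
          then show "x \<in> A - ?\<tau> ` S" using x FA by auto
        qed
        then show ?thesis by simp
      qed
    qed
    then have "?\<tau> ` S = {} \<or> ?\<tau> ` S = A" by (rule cs)
    moreover have "\<sigma> ` ?\<tau> ` S = S" by (rule image_inv_into_cancel[OF sB SB])
    ultimately show ?thesis using sB by auto
  qed
  ultimately show ?thesis by (simp add: conn_def)
qed

lemma rel_id_on: "(\<forall>a\<in>A. \<sigma> a = a) \<Longrightarrow> \<Gamma> \<subseteq> Pow A \<Longrightarrow> rel \<sigma> \<Gamma> = \<Gamma>"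
proof -
  assume h: "\<forall>a\<in>A. \<sigma> a = a" "\<Gamma> \<subseteq> Pow A"
  have "\<And>X. X \<in> \<Gamma> \<Longrightarrow> \<sigma> ` X = X" using h by (metis PowD image_cong image_ident subsetD)
  then show "rel \<sigma> \<Gamma> = \<Gamma>" by (simp add: rel_def)
qed

lemma rel_cong_on: "(\<forall>a\<in>A. \<sigma> a = \<tau> a) \<Longrightarrow> \<Gamma> \<subseteq> Pow A \<Longrightarrow> rel \<sigma> \<Gamma> = rel \<tau> \<Gamma>"
proof -
  assume h: "\<forall>a\<in>A. \<sigma> a = \<tau> a" "\<Gamma> \<subseteq> Pow A"
  have "\<And>X. X \<in> \<Gamma> \<Longrightarrow> \<sigma> ` X = \<tau> ` X" using h by (metis PowD image_cong subsetD)
  then show "rel \<sigma> \<Gamma> = rel \<tau> \<Gamma>" unfolding rel_def by (rule image_cong[OF refl])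
qed

lemma rel_comp: "rel (\<tau> \<circ> \<sigma>) \<Gamma> = rel \<tau> (rel \<sigma> \<Gamma>)"
  by (simp add: rel_def image_comp)

lemma set_species_qq: "set_species qq qa"
  unfolding set_species_def
proof (intro conjI allI impI)
  fix A B :: "'a set" and \<sigma> :: "'a \<Rightarrow> 'a" and x :: nat assume A: "finite A" and bij: "bij_betw \<sigma> A B" and x: "x \<in> qq A"
  have B: "finite B" and sB: "\<sigma> ` A = B" using bij A bij_betw_finite by (auto simp: bij_betw_def)
  have "rel \<sigma> (dec A x) \<in> CC B" using conn_rel[OF bij] dec_in[OF A x] by (simp add: CC_def)
  then show "qa \<sigma> A x \<in> qq B" unfolding qa_def sB by (rule enc_in[OF B])
next
  fix A :: "'a set" and \<sigma> :: "'a \<Rightarrow> 'a" and x :: nat assume A: "finite A" and id: "\<forall>a\<in>A. \<sigma> a = a" and x: "x \<in> qq A"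
  have "dec A x \<subseteq> Pow A" using dec_in[OF A x] by (simp add: CC_def conn_def SC_def)
  then have "rel \<sigma> (dec A x) = dec A x" by (rule rel_id_on[OF id])
  moreover have "\<sigma> ` A = A" using id by auto
  ultimately show "qa \<sigma> A x = x" by (simp add: qa_def enc_dec[OF A x])
next
  fix A :: "'a set" and \<sigma> \<tau> :: "'a \<Rightarrow> 'a" and x :: nat assume A: "finite A" and eq: "\<forall>a\<in>A. \<sigma> a = \<tau> a" and x: "x \<in> qq A"
  have "dec A x \<subseteq> Pow A" using dec_in[OF A x] by (simp add: CC_def conn_def SC_def)
  then have "rel \<sigma> (dec A x) = rel \<tau> (dec A x)" by (rule rel_cong_on[OF eq])
  moreover have "\<sigma> ` A = \<tau> ` A" using eq by (auto simp: image_def)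
  ultimately show "qa \<sigma> A x = qa \<tau> A x" by (simp add: qa_def)
next
  fix A B :: "'a set" and \<sigma> \<tau> :: "'a \<Rightarrow> 'a" and x :: nat assume A: "finite A" and bij: "bij_betw \<sigma> A B" and x: "x \<in> qq A"
  have B: "finite B" and sB: "\<sigma> ` A = B" using bij A bij_betw_finite by (auto simp: bij_betw_def)
  have c: "rel \<sigma> (dec A x) \<in> CC B" using conn_rel[OF bij] dec_in[OF A x] by (simp add: CC_def)
  have "qa \<tau> B (qa \<sigma> A x) = enc (\<tau> ` B) (rel \<tau> (rel \<sigma> (dec A x)))"
    unfolding qa_def sB dec_enc[OF B c] ..
  also have "\<dots> = qa (\<tau> \<circ> \<sigma>) A x"
  proof -
    have "(\<tau> \<circ> \<sigma>) ` A = \<tau> ` B" using sB by auto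
    then show ?thesis by (simp add: qa_def rel_comp)
  qed
  finally show "qa (\<tau> \<circ> \<sigma>) A x = qa \<tau> B (qa \<sigma> A x)" by simp
qed

definition gmap :: "'a set \<Rightarrow> 'a set set \<Rightarrow> ('a set \<times> nat) set" where
  "gmap I \<Gamma> = (\<lambda>A. (A, enc A (\<Gamma> \<inter> Pow A))) ` blocks I \<Gamma>"

lemma fst_gmap: "fst ` gmap I \<Gamma> = blocks I \<Gamma>"
  by (simp add: gmap_def image_image)

lemma ins_Un: "insert a A \<union> insert a B = insert a (A \<union> B)"
  by auto

lemma blocks_sub:
  assumes "\<Gamma> \<in> SC I" "A \<in> blocks I \<Gamma>"
  shows "A \<subseteq> I" "A \<noteq> {}"
proof -
  have "partition_on I (blocks I \<Gamma>)" using assms(1) blocks_partition by (auto simp: SC_def)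
  then show "A \<subseteq> I" "A \<noteq> {}" using assms(2) by (auto simp: partition_on_def)
qed

lemma g_basis:
  assumes I: "finite I" and G: "\<Gamma> \<in> SC I"
  shows "gmap I \<Gamma> \<in> Sq_basis qq I"
  unfolding Sq_basis_def
proof (intro CollectI conjI ballI)
  show "partition_on I (fst ` gmap I \<Gamma>)" unfolding fst_gmap
    using G blocks_partition by (auto simp: SC_def)
  show "inj_on fst (gmap I \<Gamma>)" by (auto simp: gmap_def inj_on_def)
  fix p assume "p \<in> gmap I \<Gamma>"
  then obtain A where A: "A \<in> blocks I \<Gamma>" "p = (A, enc A (\<Gamma> \<inter> Pow A))" by (auto simp: gmap_def)
  have fA: "finite A" using blocks_sub[OF G A(1)] I finite_subset by blast
  have "\<Gamma> \<inter> Pow A \<in> CC A" using blocks_conn[OF G A(1)] by (simp add: CC_def)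
  then show "snd p \<in> qq (fst p)" using A(2) enc_in[OF fA] by simp
qed

lemma g_rec:
  assumes I: "finite I" and G: "\<Gamma> \<in> SC I"
  shows "\<Gamma> = insert {} (\<Union>p\<in>gmap I \<Gamma>. dec (fst p) (snd p))"
proof -
  have "\<And>A. A \<in> blocks I \<Gamma> \<Longrightarrow> dec A (enc A (\<Gamma> \<inter> Pow A)) = \<Gamma> \<inter> Pow A"
  proof -
    fix A assume A: "A \<in> blocks I \<Gamma>"
    have fA: "finite A" using blocks_sub[OF G A] I finite_subset by blast
    have "\<Gamma> \<inter> Pow A \<in> CC A" using blocks_conn[OF G A] by (simp add: CC_def)
    then show "dec A (enc A (\<Gamma> \<inter> Pow A)) = \<Gamma> \<inter> Pow A" by (rule dec_enc[OF fA])
  qed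
  then have "(\<Union>p\<in>gmap I \<Gamma>. dec (fst p) (snd p)) = (\<Union>A\<in>blocks I \<Gamma>. \<Gamma> \<inter> Pow A)"
    by (simp add: gmap_def)
  then show ?thesis using SC_decomp[OF G] by simp
qed

lemma g_inj:
  assumes I: "finite I"
  shows "inj_on (gmap I) (SC I)"
proof (rule inj_onI)
  fix \<Gamma>1 \<Gamma>2 assume G1: "\<Gamma>1 \<in> SC I" and G2: "\<Gamma>2 \<in> SC I" and eq: "gmap I \<Gamma>1 = gmap I \<Gamma>2"
  have "\<Gamma>1 = insert {} (\<Union>p\<in>gmap I \<Gamma>1. dec (fst p) (snd p))" by (rule g_rec[OF I G1])
  also have "\<dots> = insert {} (\<Union>p\<in>gmap I \<Gamma>2. dec (fst p) (snd p))" by (simp only: eq)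
  also have "\<dots> = \<Gamma>2" by (rule g_rec[OF I G2, symmetric])
  finally show "\<Gamma>1 = \<Gamma>2" .
qed

lemma g_surj:
  assumes I: "finite I" and X: "X \<in> Sq_basis qq I"
  shows "\<exists>\<Gamma>\<in>SC I. gmap I \<Gamma> = X"
proof -
  have P: "partition_on I (fst ` X)" and inj: "inj_on fst X" and q: "\<And>p. p \<in> X \<Longrightarrow> snd p \<in> qq (fst p)"
    using X by (auto simp: Sq_basis_def)
  have fA: "finite (fst p)" if "p \<in> X" for p
  proof -
    have "fst p \<subseteq> I" using P that by (auto simp: partition_on_def)
    then show ?thesis using I finite_subset by blast
  qed
  define \<Gamma> where "\<Gamma> = insert {} (\<Union>p\<in>X. dec (fst p) (snd p))"
  have C: "conn (fst p) (dec (fst p) (snd p))" if "p \<in> X" for p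
    using dec_in[OF fA[OF that] q[OF that]] by (simp add: CC_def)
  note dc = decomp_char[OF inj P C \<Gamma>_def]
  have b: "blocks I \<Gamma> = fst ` X" using dc(3) by simp
  have "gmap I \<Gamma> = (\<lambda>p. (fst p, enc (fst p) (\<Gamma> \<inter> Pow (fst p)))) ` X"
    unfolding gmap_def b image_image ..
  also have "\<dots> = (\<lambda>p. (fst p, snd p)) ` X"
  proof (rule image_cong[OF refl])
    fix p assume p: "p \<in> X"
    show "(fst p, enc (fst p) (\<Gamma> \<inter> Pow (fst p))) = (fst p, snd p)"
    proof -
      have "\<Gamma> \<inter> Pow (fst p) = dec (fst p) (snd p)" using dc(2)[of p] p by blast
      then show ?thesis using enc_dec[OF fA[OF p] q[OF p]] by simp
    qed
  qed
  also have "\<dots> = X" by simp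
  finally show ?thesis using dc(1) by blast
qed

lemma g_bij:
  assumes I: "finite I"
  shows "bij_betw (gmap I) (SC I) (Sq_basis qq I)"
  unfolding bij_betw_def
proof
  show "inj_on (gmap I) (SC I)" by (rule g_inj[OF I])
  show "gmap I ` SC I = Sq_basis qq I"
  proof
    show "gmap I ` SC I \<subseteq> Sq_basis qq I" using g_basis[OF I] by blast
    show "Sq_basis qq I \<subseteq> gmap I ` SC I" using g_surj[OF I] by blast
  qed
qed

lemma g_mult:
  assumes S: "finite S" and T: "finite T" and ST: "S \<inter> T = {}"
    and G1: "\<Gamma>1 \<in> SC S" and G2: "\<Gamma>2 \<in> SC T"
  shows "gmap (S \<union> T) (\<Gamma>1 \<union> \<Gamma>2) = gmap S \<Gamma>1 \<union> gmap T \<Gamma>2"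
proof -
  let ?K = "blocks S \<Gamma>1 \<union> blocks T \<Gamma>2"
  define Zf where "Zf A = (if A \<in> blocks S \<Gamma>1 then \<Gamma>1 \<inter> Pow A else \<Gamma>2 \<inter> Pow A)" for A
  have nb: "A \<notin> blocks S \<Gamma>1" if "A \<in> blocks T \<Gamma>2" for A
    using blocks_sub[OF G1, of A] blocks_sub[OF G2 that] ST by blast
  have P: "partition_on (S \<union> T) (id ` ?K)"
  proof (rule partition_onI)
    have p1: "partition_on S (blocks S \<Gamma>1)" and p2: "partition_on T (blocks T \<Gamma>2)"
      using G1 G2 blocks_partition by (auto simp: SC_def)
    show "\<Union>(id ` ?K) = S \<union> T" using p1 p2 by (auto simp: partition_on_def)
    show "{} \<notin> id ` ?K" using p1 p2 by (auto simp: partition_on_def)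
    fix p q assume p: "p \<in> id ` ?K" and q: "q \<in> id ` ?K" and pq: "p \<noteq> q"
    show "disjnt p q"
    proof (cases "p \<in> blocks S \<Gamma>1")
      case True
      show ?thesis
      proof (cases "q \<in> blocks S \<Gamma>1")
        case True
        then show ?thesis using p1 \<open>p \<in> blocks S \<Gamma>1\<close> pq by (auto simp: partition_on_def pairwise_def)
      next
        case False
        then have "q \<subseteq> T" using q blocks_sub[OF G2] by auto
        moreover have "p \<subseteq> S" using True blocks_sub[OF G1] by auto
        ultimately show ?thesis using ST by (auto simp: disjnt_def)
      qed
    next
      case False
      then have pT: "p \<in> blocks T \<Gamma>2" using p by auto
      show ?thesis
      proof (cases "q \<in> blocks S \<Gamma>1")
        case True
        then have "q \<subseteq> S" using blocks_sub[OF G1] by auto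
        moreover have "p \<subseteq> T" using pT blocks_sub[OF G2] by auto
        ultimately show ?thesis using ST by (auto simp: disjnt_def)
      next
        case False
        then have "q \<in> blocks T \<Gamma>2" using q by auto
        then show ?thesis using p2 pT pq by (auto simp: partition_on_def pairwise_def)
      qed
    qed
  qed
  have C: "conn (id A) (Zf A)" if "A \<in> ?K" for A
    using that blocks_conn[OF G1] blocks_conn[OF G2] nb by (auto simp: Zf_def)
  have "(\<Union>A\<in>?K. Zf A) = (\<Union>A\<in>blocks S \<Gamma>1. \<Gamma>1 \<inter> Pow A) \<union> (\<Union>A\<in>blocks T \<Gamma>2. \<Gamma>2 \<inter> Pow A)"
    using nb by (auto simp: Zf_def)
  moreover have "\<Gamma>1 \<union> \<Gamma>2 = insert {} (\<Union>A\<in>blocks S \<Gamma>1. \<Gamma>1 \<inter> Pow A) \<union> insert {} (\<Union>A\<in>blocks T \<Gamma>2. \<Gamma>2 \<inter> Pow A)"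
    by (rule arg_cong2[OF SC_decomp[OF G1] SC_decomp[OF G2]])
  ultimately have U: "\<Gamma>1 \<union> \<Gamma>2 = insert {} (\<Union>A\<in>?K. Zf A)"
    by (simp only: ins_Un)
  note dc = decomp_char[OF inj_on_id P C U]
  have "gmap (S \<union> T) (\<Gamma>1 \<union> \<Gamma>2) = (\<lambda>A. (A, enc A (Zf A))) ` ?K"
  proof -
    have b: "blocks (S \<union> T) (\<Gamma>1 \<union> \<Gamma>2) = ?K" using dc(3) by simp
    show ?thesis unfolding gmap_def b using dc(2) by (intro image_cong) auto
  qed
  also have "\<dots> = gmap S \<Gamma>1 \<union> gmap T \<Gamma>2"
    unfolding gmap_def image_Un using nb by (auto simp: Zf_def)
  finally show ?thesis .
qed

lemma g_empty: "gmap {} {{}} = {}"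
  by (simp add: gmap_def blocks_def)

lemma inj_on_image_Pow: "inj_on \<sigma> I \<Longrightarrow> inj_on (\<lambda>X. \<sigma> ` X) (Pow I)"
  by (metis PowD inj_on_def inj_on_image_eq_iff)

lemma g_nat:
  assumes I: "finite I" and bij: "bij_betw \<sigma> I J" and G: "\<Gamma> \<in> SC I"
  shows "gmap J (rel \<sigma> \<Gamma>) = (\<lambda>p. (\<sigma> ` fst p, qa \<sigma> (fst p) (snd p))) ` gmap I \<Gamma>"
proof -
  let ?K = "blocks I \<Gamma>"
  have inj: "inj_on \<sigma> I" and sI: "\<sigma> ` I = J" using bij by (auto simp: bij_betw_def)
  have KI: "A \<subseteq> I" if "A \<in> ?K" for A using blocks_sub[OF G that] by simp
  have Kne: "A \<noteq> {}" if "A \<in> ?K" for A using blocks_sub[OF G that] by simp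
  have PK: "partition_on I ?K" using G blocks_partition by (auto simp: SC_def)
  have injK: "inj_on (\<lambda>X. \<sigma> ` X) ?K"
    by (rule inj_on_subset[OF inj_on_image_Pow[OF inj]]) (use KI in auto)
  have P: "partition_on J ((\<lambda>X. \<sigma> ` X) ` ?K)"
  proof (rule partition_onI)
    have "\<Union>?K = I" using PK by (simp add: partition_on_def)
    then show "\<Union>((\<lambda>X. \<sigma> ` X) ` ?K) = J" using sI by auto
    show "{} \<notin> (\<lambda>X. \<sigma> ` X) ` ?K" using Kne by auto
    fix p q assume p: "p \<in> (\<lambda>X. \<sigma> ` X) ` ?K" and q: "q \<in> (\<lambda>X. \<sigma> ` X) ` ?K" and pq: "p \<noteq> q"
    obtain A B where A: "A \<in> ?K" "p = \<sigma> ` A" and B: "B \<in> ?K" "q = \<sigma> ` B" using p q by auto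
    have "A \<noteq> B" using pq A B by auto
    then have "A \<inter> B = {}" using PK A(1) B(1) by (auto simp: partition_on_def pairwise_def disjnt_def)
    moreover have "\<sigma> ` (A \<inter> B) = \<sigma> ` A \<inter> \<sigma> ` B"
      by (rule inj_on_image_Int[OF inj KI[OF A(1)] KI[OF B(1)]])
    ultimately show "disjnt p q" using A B by (auto simp: disjnt_def)
  qed
  have C: "conn (\<sigma> ` A) (rel \<sigma> (\<Gamma> \<inter> Pow A))" if A: "A \<in> ?K" for A
  proof -
    have "bij_betw \<sigma> A (\<sigma> ` A)" using inj_on_subset[OF inj KI[OF A]] by (simp add: bij_betw_def)
    then show ?thesis by (rule conn_rel[OF _ blocks_conn[OF G A]])
  qed
  have "rel \<sigma> \<Gamma> = rel \<sigma> (insert {} (\<Union>A\<in>?K. \<Gamma> \<inter> Pow A))" using SC_decomp[OF G] by (rule arg_cong)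
  also have "\<dots> = insert {} (\<Union>A\<in>?K. rel \<sigma> (\<Gamma> \<inter> Pow A))" by (simp only: rel_def image_insert image_UN image_empty)
  finally have U: "rel \<sigma> \<Gamma> = insert {} (\<Union>A\<in>?K. rel \<sigma> (\<Gamma> \<inter> Pow A))" .
  note dc = decomp_char[OF injK P C U]
  have b: "blocks J (rel \<sigma> \<Gamma>) = (\<lambda>X. \<sigma> ` X) ` ?K" using dc(3) by simp
  have r: "rel \<sigma> \<Gamma> \<inter> Pow (\<sigma> ` A) = rel \<sigma> (\<Gamma> \<inter> Pow A)" if "A \<in> ?K" for A
    using dc(2)[of A] that by blast
  have "gmap J (rel \<sigma> \<Gamma>) = (\<lambda>A. (\<sigma> ` A, enc (\<sigma> ` A) (rel \<sigma> (\<Gamma> \<inter> Pow A)))) ` ?K"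
    unfolding gmap_def b image_image using r by (intro image_cong) auto
  also have "\<dots> = (\<lambda>p. (\<sigma> ` fst p, qa \<sigma> (fst p) (snd p))) ` gmap I \<Gamma>"
    unfolding gmap_def image_image
  proof (rule image_cong[OF refl])
    fix A assume A: "A \<in> ?K"
    have fA: "finite A" using KI[OF A] I finite_subset by blast
    have "\<Gamma> \<inter> Pow A \<in> CC A" using blocks_conn[OF G A] by (simp add: CC_def)
    then have "qa \<sigma> A (enc A (\<Gamma> \<inter> Pow A)) = enc (\<sigma> ` A) (rel \<sigma> (\<Gamma> \<inter> Pow A))"
      by (simp add: qa_def dec_enc[OF fA])
    then show "(\<sigma> ` A, enc (\<sigma> ` A) (rel \<sigma> (\<Gamma> \<inter> Pow A))) =
        (\<sigma> ` fst (A, enc A (\<Gamma> \<inter> Pow A)), qa \<sigma> (fst (A, enc A (\<Gamma> \<inter> Pow A))) (snd (A, enc A (\<Gamma> \<inter> Pow A))))"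
      by simp
  qed
  finally show ?thesis .
qed

lemma g_split1:
  assumes D: "\<Delta> \<in> SC (S \<union> T)" and h: "\<forall>A\<in>fst ` gmap (S \<union> T) \<Delta>. A \<subseteq> S \<or> A \<subseteq> T"
  shows "\<Delta> = (\<Delta> \<inter> Pow S) \<union> (\<Delta> \<inter> Pow T)"
proof
  have DP: "\<Delta> \<subseteq> Pow (S \<union> T)" using D by (simp add: SC_def)
  have e: "{} \<in> \<Delta>" using D by (simp add: SC_def)
  show "\<Delta> \<subseteq> (\<Delta> \<inter> Pow S) \<union> (\<Delta> \<inter> Pow T)"
  proof
    fix F assume F: "F \<in> \<Delta>"
    show "F \<in> (\<Delta> \<inter> Pow S) \<union> (\<Delta> \<inter> Pow T)"
    proof (cases "F = {}")
      case False
      then obtain i where i: "i \<in> F" by auto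
      then have iU: "i \<in> S \<union> T" using F DP by auto
      have "blk (S \<union> T) \<Delta> i \<in> fst ` gmap (S \<union> T) \<Delta>" unfolding fst_gmap blocks_def using iU by simp
      then have "blk (S \<union> T) \<Delta> i \<subseteq> S \<or> blk (S \<union> T) \<Delta> i \<subseteq> T" using h by blast
      moreover have "F \<subseteq> blk (S \<union> T) \<Delta> i" by (rule face_in_blk[OF DP F i])
      ultimately show ?thesis using F by auto
    qed (use e in simp)
  qed
qed auto

lemma g_split2:
  assumes S: "finite S" and T: "finite T" and ST: "S \<inter> T = {}"
    and D: "\<Delta> \<in> SC (S \<union> T)" and h: "\<Delta> = (\<Delta> \<inter> Pow S) \<union> (\<Delta> \<inter> Pow T)"
  shows "(\<forall>A\<in>fst ` gmap (S \<union> T) \<Delta>. A \<subseteq> S \<or> A \<subseteq> T)"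
    "{r \<in> gmap (S \<union> T) \<Delta>. fst r \<subseteq> S} = gmap S (\<Delta> \<inter> Pow S)"
    "{r \<in> gmap (S \<union> T) \<Delta>. fst r \<subseteq> T} = gmap T (\<Delta> \<inter> Pow T)"
proof -
  have D1: "\<Delta> \<inter> Pow S \<in> SC S" and D2: "\<Delta> \<inter> Pow T \<in> SC T" using SC_restr[OF D] by auto
  have g: "gmap (S \<union> T) \<Delta> = gmap S (\<Delta> \<inter> Pow S) \<union> gmap T (\<Delta> \<inter> Pow T)"
    using g_mult[OF S T ST D1 D2] h by simp
  have f1: "fst r \<subseteq> S \<and> fst r \<noteq> {}" if "r \<in> gmap S (\<Delta> \<inter> Pow S)" for r
    using that blocks_sub[OF D1] fst_gmap by blast
  have f2: "fst r \<subseteq> T \<and> fst r \<noteq> {}" if "r \<in> gmap T (\<Delta> \<inter> Pow T)" for r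
    using that blocks_sub[OF D2] fst_gmap by blast
  show "\<forall>A\<in>fst ` gmap (S \<union> T) \<Delta>. A \<subseteq> S \<or> A \<subseteq> T" unfolding g using f1 f2 by blast
  show "{r \<in> gmap (S \<union> T) \<Delta>. fst r \<subseteq> S} = gmap S (\<Delta> \<inter> Pow S)"
    unfolding g using f1 f2 ST by blast
  show "{r \<in> gmap (S \<union> T) \<Delta>. fst r \<subseteq> T} = gmap T (\<Delta> \<inter> Pow T)"
    unfolding g using f1 f2 ST by blast
qed

lemma basis_bij_lin:
  assumes bij: "bij_betw g B C" and B: "finite B"
  shows "bij_betw (lin (\<lambda>x y. if y = g x then 1 else 0) :: _ \<Rightarrow> _ \<Rightarrow> 'k::comm_ring_1) (fspace B) (fspace C)"
proof -
  let ?a = "\<lambda>x y. if y = g x then 1 else (0::'k)"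
  have C: "finite C" using bij B bij_betw_finite by blast
  have gB: "g ` B = C" and inj: "inj_on g B" using bij by (auto simp: bij_betw_def)
  have ev: "lin ?a f y = (if y \<in> C then f (inv_into B g y) else 0)" if f: "f \<in> fspace B" for f y
  proof -
    have "lin ?a f y = (\<Sum>x\<in>B. f x * ?a x y)" using f B by (intro lin_eq_sum) (auto simp: fspace_def)
    also have "\<dots> = (\<Sum>x\<in>B. if y = g x then f x else 0)" by (rule sum.cong) auto
    also have "\<dots> = (if y \<in> C then f (inv_into B g y) else 0)"
    proof (cases "y \<in> C")
      case True
      have iB: "inv_into B g y \<in> B" using True gB by (auto intro: inv_into_into)
      have "(\<Sum>x\<in>B. if y = g x then f x else 0) = f (inv_into B g y)"
      proof (rule sum_single[OF B iB])
        fix x assume x: "x \<in> B"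
        show "y = g x \<longleftrightarrow> x = inv_into B g y"
          using x inj True gB by (auto simp: inv_into_f_f f_inv_into_f)
      qed
      then show ?thesis using True by simp
    next
      case False
      then show ?thesis using gB by (auto intro!: sum.neutral)
    qed
    finally show ?thesis .
  qed
  let ?f' = "\<lambda>h x. if x \<in> B then h (g x) else (0::'k)"
  show ?thesis
  proof (rule bij_betw_byWitness[where f' = ?f'])
    show "\<forall>f\<in>fspace B. ?f' (lin ?a f) = f"
    proof
      fix f :: "_ \<Rightarrow> 'k" assume f: "f \<in> fspace B"
      show "?f' (lin ?a f) = f"
      proof (rule ext)
        fix x
        show "?f' (lin ?a f) x = f x"
        proof (cases "x \<in> B")
          case True
          then show ?thesis using ev[OF f] gB inj by (auto simp: inv_into_f_f)
        next
          case False
          then show ?thesis using f by (auto simp: fspace_def supp_def)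
        qed
      qed
    qed
    have f'B: "?f' h \<in> fspace B" for h
    proof -
      have "supp (?f' h) \<subseteq> B" by (auto simp: supp_def)
      then show ?thesis using B finite_subset by (auto simp: fspace_def)
    qed
    show "\<forall>h\<in>fspace C. lin ?a (?f' h) = h"
    proof
      fix h :: "_ \<Rightarrow> 'k" assume h: "h \<in> fspace C"
      show "lin ?a (?f' h) = h"
      proof (rule ext)
        fix y
        show "lin ?a (?f' h) y = h y"
        proof (cases "y \<in> C")
          case True
          have "inv_into B g y \<in> B" using True gB by (auto intro: inv_into_into)
          then show ?thesis using ev[OF f'B] True gB by (simp add: f_inv_into_f)
        next
          case False
          then show ?thesis using ev[OF f'B] h by (auto simp: fspace_def supp_def)
        qed
      qed
    qed
    show "lin ?a ` fspace B \<subseteq> fspace C"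
    proof
      fix k assume "k \<in> lin ?a ` fspace B"
      then obtain f where f: "f \<in> fspace B" "k = lin ?a f" by auto
      have "\<And>x. x \<in> B \<Longrightarrow> supp (?a x) \<subseteq> C" using gB by (auto simp: supp_def)
      then show "k \<in> fspace C" using lin_fspace[OF C _ f(1), of ?a] f(2) by simp
    qed
    show "?f' ` fspace C \<subseteq> fspace B" using f'B by auto
  qed
qed

definition gm :: "'a set \<Rightarrow> 'a set set \<Rightarrow> ('a set \<times> nat) set \<Rightarrow> 'k::comm_ring_1" where
  "gm I \<Gamma> X = (if X = gmap I \<Gamma> then 1 else 0)"

definition phi :: "'a set \<Rightarrow> ('a set set \<Rightarrow> 'k::comm_ring_1) \<Rightarrow> ('a set \<times> nat) set \<Rightarrow> 'k" where
  "phi I = lin (gm I)"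

abbreviation SQ :: "('a, ('a set \<times> nat) set, 'k::comm_ring_1) lspecies" where
  "SQ \<equiv> Sq qq qa"

lemma basis_SQ[simp]: "basis SQ = Sq_basis qq"
  by (simp add: Sq_def)

lemma act_SQ: "act SQ \<sigma> I X = (\<lambda>p. (\<sigma> ` fst p, qa \<sigma> (fst p) (snd p))) ` X"
  by (simp add: Sq_def)

lemma mult_SQ: "mult SQ S T = lin (\<lambda>p X. if X = fst p \<union> snd p then 1 else 0)"
  by (rule ext) (simp add: Sq_def linrel_lin)

lemma comult_SQ: "comult SQ S T = lin (\<lambda>X p. if (\<forall>A\<in>fst ` X. A \<subseteq> S \<or> A \<subseteq> T)
                 \<and> p = ({r\<in>X. fst r \<subseteq> S}, {r\<in>X. fst r \<subseteq> T}) then 1 else 0)"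
  by (rule ext) (simp add: Sq_def linrel_lin)

lemma munit_SQ: "munit SQ = delta {}" and ccounit_SQ: "ccounit SQ f = f {}"
  by (simp_all add: Sq_def)

lemma phi_iso:
  assumes I: "finite I"
  shows "lin_iso (fspace (SC I)) (fspace (Sq_basis qq I)) (phi I :: _ \<Rightarrow> _ \<Rightarrow> 'k::comm_ring_1)"
  unfolding lin_iso_def
proof
  have C: "finite (Sq_basis qq I)" using g_bij[OF I] SC_finite[OF I] bij_betw_finite by blast
  show "linear_on (fspace (SC I)) (fspace (Sq_basis qq I)) (phi I :: _ \<Rightarrow> _ \<Rightarrow> 'k)"
    unfolding phi_def
    by (rule linear_on_lin[OF C]) (use g_basis[OF I] in \<open>auto simp: supp_def gm_def\<close>)
  show "bij_betw (phi I :: _ \<Rightarrow> _ \<Rightarrow> 'k) (fspace (SC I)) (fspace (Sq_basis qq I))"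
    unfolding phi_def gm_def by (rule basis_bij_lin[OF g_bij[OF I] SC_finite[OF I]])
qed

lemma phi_nat:
  assumes I: "finite I" and bij: "bij_betw \<sigma> I J" and f: "f \<in> fspace (SC I)"
  shows "phi J (relab kSC \<sigma> I f) = relab SQ \<sigma> I (phi I f :: _ \<Rightarrow> 'k::comm_ring_1)"
proof -
  have J: "finite J" using bij I bij_betw_finite by blast
  have fs: "finite (supp f)" "supp f \<subseteq> SC I" using f by (auto simp: fspace_def)
  let ?r = "\<lambda>x y. if y = rel \<sigma> x then 1 else (0::'k)"
  let ?r' = "\<lambda>x y. if y = act (SQ :: ('a, _, 'k) lspecies) \<sigma> I x then 1 else (0::'k)"
  have L: "phi J (relab kSC \<sigma> I f) = lin (\<lambda>x z. \<Sum>y\<in>SC J. ?r x y * gm J y z) f"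
    unfolding phi_def relab_lin act_kSC
  proof (rule lin_comp)
    show "finite (supp f)" by (rule fs(1))
    show "finite (SC J)" by (rule SC_finite[OF J])
    fix x assume "x \<in> supp f"
    then have "rel \<sigma> x \<in> SC J" using rel_SC[OF bij] fs(2) by blast
    then show "supp (?r x) \<subseteq> SC J" by (auto simp: supp_def)
  qed
  have R: "relab SQ \<sigma> I (phi I f) = lin (\<lambda>x z. \<Sum>y\<in>gmap I ` SC I. gm I x y * ?r' y z) f"
    unfolding phi_def relab_lin
  proof (rule lin_comp)
    show "finite (supp f)" by (rule fs(1))
    show "finite (gmap I ` SC I)" using SC_finite[OF I] by simp
    fix x assume "x \<in> supp f"
    then have "gmap I x \<in> gmap I ` SC I" using fs(2) by blast
    then show "supp (gm I x :: _ \<Rightarrow> 'k) \<subseteq> gmap I ` SC I" by (auto simp: supp_def gm_def)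
  qed
  have "lin (\<lambda>x z. \<Sum>y\<in>SC J. ?r x y * gm J y z) f = lin (\<lambda>x z. \<Sum>y\<in>gmap I ` SC I. gm I x y * ?r' y z) f"
  proof (rule lin_cong, rule ext)
    fix x z assume "x \<in> supp f"
    then have x: "x \<in> SC I" using fs(2) by blast
    have xJ: "rel \<sigma> x \<in> SC J" by (rule rel_SC[OF bij x])
    have "(\<Sum>y\<in>SC J. ?r x y * gm J y z) = (\<Sum>y\<in>SC J. if y = rel \<sigma> x then gm J y z else 0)"
      by (rule sum.cong) auto
    also have "\<dots> = gm J (rel \<sigma> x) z" by (rule sum_single[OF SC_finite[OF J] xJ]) simp
    also have "\<dots> = (if z = act (SQ :: ('a, _, 'k) lspecies) \<sigma> I (gmap I x) then 1 else 0)"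
      by (simp add: gm_def g_nat[OF I bij x] act_SQ)
    also have "\<dots> = (\<Sum>y\<in>gmap I ` SC I. if y = gmap I x then ?r' y z else 0)"
      by (rule sum_single[symmetric]) (use SC_finite[OF I] x in auto)
    also have "\<dots> = (\<Sum>y\<in>gmap I ` SC I. gm I x y * ?r' y z)"
      by (rule sum.cong) (auto simp: gm_def)
    finally show "(\<Sum>y\<in>SC J. ?r x y * gm J y z) = (\<Sum>y\<in>gmap I ` SC I. gm I x y * ?r' y z)" .
  qed
  then show ?thesis using L R by simp
qed

lemma phi_mult:
  assumes S: "finite S" and T: "finite T" and ST: "S \<inter> T = {}"
    and F: "F \<in> fspace (SC S \<times> SC T)"
  shows "phi (S \<union> T) (mult kSC S T F) = mult SQ S T (tensor_map (phi S) (phi T) (F :: _ \<Rightarrow> 'k::comm_ring_1))"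
proof -
  have U: "finite (S \<union> T)" using S T by simp
  have Fs: "finite (supp F)" "supp F \<subseteq> SC S \<times> SC T" using F by (auto simp: fspace_def)
  let ?m = "\<lambda>p y. if y = fst p \<union> snd p then 1 else (0::'k)"
  let ?t = "\<lambda>p (u, v). gm S (fst p) u * gm T (snd p) v :: 'k"
  let ?Y = "gmap S ` SC S \<times> gmap T ` SC T"
  have L: "phi (S \<union> T) (mult kSC S T F) = lin (\<lambda>p z. \<Sum>y\<in>SC (S \<union> T). ?m p y * gm (S \<union> T) y z) F"
    unfolding phi_def mult_kSC
  proof (rule lin_comp)
    show "finite (supp F)" by (rule Fs(1))
    show "finite (SC (S \<union> T))" by (rule SC_finite[OF U])
    fix p assume "p \<in> supp F"
    then have "p \<in> SC S \<times> SC T" using Fs(2) by blast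
    then have "fst p \<in> SC S" "snd p \<in> SC T" by auto
    then have "fst p \<union> snd p \<in> SC (S \<union> T)" by (rule SC_union)
    then show "supp (?m p) \<subseteq> SC (S \<union> T)" by (auto simp: supp_def)
  qed
  have R: "mult SQ S T (tensor_map (phi S) (phi T) F) = lin (\<lambda>p z. \<Sum>q\<in>?Y. ?t p q * ?m q z) F"
    unfolding phi_def tensor_lin mult_SQ
  proof (rule lin_comp)
    show "finite (supp F)" by (rule Fs(1))
    show "finite ?Y" using SC_finite[OF S] SC_finite[OF T] by simp
    fix p assume "p \<in> supp F"
    then have "p \<in> SC S \<times> SC T" using Fs(2) by blast
    then have "fst p \<in> SC S" "snd p \<in> SC T" by auto
    then have "(gmap S (fst p), gmap T (snd p)) \<in> ?Y" by simp
    moreover have "supp (?t p) \<subseteq> {(gmap S (fst p), gmap T (snd p))}"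
      by (auto simp: supp_def gm_def split: if_splits)
    ultimately show "supp (?t p) \<subseteq> ?Y" by blast
  qed
  have "lin (\<lambda>p z. \<Sum>y\<in>SC (S \<union> T). ?m p y * gm (S \<union> T) y z) F = lin (\<lambda>p z. \<Sum>q\<in>?Y. ?t p q * ?m q z) F"
  proof (rule lin_cong, rule ext)
    fix p z assume "p \<in> supp F"
    then have p: "fst p \<in> SC S" "snd p \<in> SC T" using Fs(2) by auto
    have pu: "fst p \<union> snd p \<in> SC (S \<union> T)" using SC_union[OF p] .
    have pY: "(gmap S (fst p), gmap T (snd p)) \<in> ?Y" using p by simp
    have "(\<Sum>y\<in>SC (S \<union> T). ?m p y * gm (S \<union> T) y z) =
          (\<Sum>y\<in>SC (S \<union> T). if y = fst p \<union> snd p then gm (S \<union> T) y z else 0)"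
      by (rule sum.cong) auto
    also have "\<dots> = gm (S \<union> T) (fst p \<union> snd p) z" by (rule sum_single[OF SC_finite[OF U] pu]) simp
    also have "\<dots> = ?m (gmap S (fst p), gmap T (snd p)) z"
      by (simp add: gm_def g_mult[OF S T ST p])
    also have "\<dots> = (\<Sum>q\<in>?Y. if q = (gmap S (fst p), gmap T (snd p)) then ?m q z else 0)"
      by (rule sum_single[symmetric]) (use SC_finite[OF S] SC_finite[OF T] pY in auto)
    also have "\<dots> = (\<Sum>q\<in>?Y. ?t p q * ?m q z)"
    proof (rule sum.cong[OF refl])
      fix q :: "('a set \<times> nat) set \<times> ('a set \<times> nat) set"
      obtain u v where q: "q = (u, v)" by (cases q)
      show "(if q = (gmap S (fst p), gmap T (snd p)) then ?m q z else 0) = ?t p q * ?m q z"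
        unfolding q by (simp add: gm_def)
    qed
    finally show "(\<Sum>y\<in>SC (S \<union> T). ?m p y * gm (S \<union> T) y z) = (\<Sum>q\<in>?Y. ?t p q * ?m q z)" .
  qed
  then show ?thesis using L R by simp
qed

lemma phi_unit: "phi {} (munit kSC) = (munit SQ :: _ \<Rightarrow> 'k::comm_ring_1)"
  unfolding phi_def munit_kSC lin_delta munit_SQ
  by (rule ext) (simp add: gm_def g_empty delta_def)

lemma phi_counit:
  assumes f: "f \<in> fspace (SC {})"
  shows "ccounit SQ (phi {} f) = ccounit (lin_dual kSC) (f :: _ \<Rightarrow> 'k::comm_ring_1)"
proof -
  have "ccounit SQ (phi {} f) = (\<Sum>x\<in>{{{}}}. f x * gm {} x {})"
    unfolding ccounit_SQ phi_def by (rule lin_eq_sum) (use f in \<open>auto simp: fspace_def SC_empty\<close>)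
  also have "\<dots> = f {{}}" by (simp add: gm_def g_empty)
  also have "\<dots> = ccounit (lin_dual kSC) f" by (simp add: lin_dual_def SC_empty munit_kSC delta_def)
  finally show ?thesis .
qed

lemma union_restr:
  assumes ST: "S \<inter> T = {}" and q1: "q1 \<in> SC S" and q2: "q2 \<in> SC T"
  shows "(q1 \<union> q2) \<inter> Pow S = q1" "(q1 \<union> q2) \<inter> Pow T = q2"
proof -
  have a: "q1 \<subseteq> Pow S" "{} \<in> q1" using q1 by (auto simp: SC_def)
  have b: "q2 \<subseteq> Pow T" "{} \<in> q2" using q2 by (auto simp: SC_def)
  have c: "X = {}" if "X \<subseteq> S" "X \<subseteq> T" for X using that ST by auto
  show "(q1 \<union> q2) \<inter> Pow S = q1"
  proof
    show "(q1 \<union> q2) \<inter> Pow S \<subseteq> q1"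
    proof
      fix X assume X: "X \<in> (q1 \<union> q2) \<inter> Pow S"
      show "X \<in> q1"
      proof (cases "X \<in> q1")
        case False
        then have "X \<in> q2" using X by blast
        then have "X \<subseteq> T" using b(1) by blast
        then have "X = {}" using X c by blast
        then show ?thesis using a(2) by simp
      qed
    qed
    show "q1 \<subseteq> (q1 \<union> q2) \<inter> Pow S" using a(1) by blast
  qed
  show "(q1 \<union> q2) \<inter> Pow T = q2"
  proof
    show "(q1 \<union> q2) \<inter> Pow T \<subseteq> q2"
    proof
      fix X assume X: "X \<in> (q1 \<union> q2) \<inter> Pow T"
      show "X \<in> q2"
      proof (cases "X \<in> q2")
        case False
        then have "X \<in> q1" using X by blast
        then have "X \<subseteq> S" using a(1) by blast
        then have "X = {}" using X c by blast
        then show ?thesis using b(2) by simp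
      qed
    qed
    show "q2 \<subseteq> (q1 \<union> q2) \<inter> Pow T" using b(1) by blast
  qed
qed

lemma comult_dual_lin:
  assumes S: "finite S" and T: "finite T" and h: "h \<in> fspace (SC (S \<union> T))"
  shows "comult (lin_dual kSC) S T h =
         lin (\<lambda>\<Delta> p. if p \<in> SC S \<times> SC T \<and> \<Delta> = fst p \<union> snd p then 1 else 0) (h :: _ \<Rightarrow> 'k::comm_ring_1)"
proof (rule ext)
  fix p :: "'a set set \<times> 'a set set"
  have U: "finite (S \<union> T)" using S T by simp
  have hs: "supp h \<subseteq> SC (S \<union> T)" using h by (simp add: fspace_def)
  show "comult (lin_dual kSC) S T h p =
         lin (\<lambda>\<Delta> p. if p \<in> SC S \<times> SC T \<and> \<Delta> = fst p \<union> snd p then 1 else 0) h p"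
  proof (cases "p \<in> SC S \<times> SC T")
    case True
    have pu: "fst p \<union> snd p \<in> SC (S \<union> T)" using SC_union True by (cases p) auto
    have "comult (lin_dual kSC) S T h p = (\<Sum>y\<in>SC (S \<union> T). h y * mult kSC S T (delta p) y)"
      using True by (simp add: lin_dual_def)
    also have "\<dots> = (\<Sum>y\<in>SC (S \<union> T). if y = fst p \<union> snd p then h y else 0)"
      unfolding mult_kSC lin_delta by (rule sum.cong) auto
    also have "\<dots> = h (fst p \<union> snd p)" by (rule sum_single[OF SC_finite[OF U] pu]) simp
    also have "\<dots> = (\<Sum>y\<in>SC (S \<union> T). if y = fst p \<union> snd p then h y else 0)"
      by (rule sum_single[symmetric, OF SC_finite[OF U] pu]) simp
    also have "\<dots> = (\<Sum>y\<in>SC (S \<union> T). h y * (if p \<in> SC S \<times> SC T \<and> y = fst p \<union> snd p then 1 else 0))"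
      using True by (intro sum.cong) auto
    also have "\<dots> = lin (\<lambda>\<Delta> p. if p \<in> SC S \<times> SC T \<and> \<Delta> = fst p \<union> snd p then 1 else 0) h p"
      by (rule lin_eq_sum[symmetric, OF SC_finite[OF U] hs])
    finally show ?thesis .
  next
    case False
    then show ?thesis by (simp add: lin_dual_def lin_def)
  qed
qed

lemma phi_comult:
  assumes S: "finite S" and T: "finite T" and ST: "S \<inter> T = {}"
    and f: "f \<in> fspace (SC (S \<union> T))"
  shows "comult SQ S T (phi (S \<union> T) f) =
         tensor_map (phi S) (phi T) (comult (lin_dual kSC) S T (f :: _ \<Rightarrow> 'k::comm_ring_1))"
proof -
  have U: "finite (S \<union> T)" using S T by simp
  have fs: "finite (supp f)" "supp f \<subseteq> SC (S \<union> T)" using f by (auto simp: fspace_def)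
  let ?c = "\<lambda>X p. if (\<forall>A\<in>fst ` X. A \<subseteq> S \<or> A \<subseteq> T)
                 \<and> p = ({r\<in>X. fst r \<subseteq> S}, {r\<in>X. fst r \<subseteq> T}) then 1 else (0::'k)"
  let ?cd = "\<lambda>\<Delta> p. if p \<in> SC S \<times> SC T \<and> \<Delta> = fst p \<union> snd p then 1 else (0::'k)"
  let ?t = "\<lambda>q (u, v). gm S (fst q) u * gm T (snd q) v :: 'k"
  let ?Y = "gmap (S \<union> T) ` SC (S \<union> T)"
  have L: "comult SQ S T (phi (S \<union> T) f) = lin (\<lambda>\<Delta> z. \<Sum>X\<in>?Y. gm (S \<union> T) \<Delta> X * ?c X z) f"
    unfolding phi_def comult_SQ
  proof (rule lin_comp)
    show "finite (supp f)" by (rule fs(1))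
    show "finite ?Y" using SC_finite[OF U] by simp
    fix \<Delta> assume "\<Delta> \<in> supp f"
    then have "gmap (S \<union> T) \<Delta> \<in> ?Y" using fs(2) by blast
    then show "supp (gm (S \<union> T) \<Delta> :: _ \<Rightarrow> 'k) \<subseteq> ?Y" by (auto simp: supp_def gm_def)
  qed
  have R: "tensor_map (phi S) (phi T) (comult (lin_dual kSC) S T f) =
           lin (\<lambda>\<Delta> z. \<Sum>q\<in>SC S \<times> SC T. ?cd \<Delta> q * ?t q z) f"
    unfolding comult_dual_lin[OF S T f] phi_def tensor_lin
  proof (rule lin_comp)
    show "finite (supp f)" by (rule fs(1))
    show "finite (SC S \<times> SC T)" using SC_finite[OF S] SC_finite[OF T] by simp
    fix \<Delta> show "supp (?cd \<Delta>) \<subseteq> SC S \<times> SC T" by (auto simp: supp_def split: if_splits)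
  qed
  have "lin (\<lambda>\<Delta> z. \<Sum>X\<in>?Y. gm (S \<union> T) \<Delta> X * ?c X z) f = lin (\<lambda>\<Delta> z. \<Sum>q\<in>SC S \<times> SC T. ?cd \<Delta> q * ?t q z) f"
  proof (rule lin_cong, rule ext)
    fix \<Delta> z assume "\<Delta> \<in> supp f"
    then have D: "\<Delta> \<in> SC (S \<union> T)" using fs(2) by blast
    have D1: "\<Delta> \<inter> Pow S \<in> SC S" and D2: "\<Delta> \<inter> Pow T \<in> SC T" using SC_restr[OF D] by auto
    have gY: "gmap (S \<union> T) \<Delta> \<in> ?Y" using D by blast
    have "(\<Sum>X\<in>?Y. gm (S \<union> T) \<Delta> X * ?c X z) = (\<Sum>X\<in>?Y. if X = gmap (S \<union> T) \<Delta> then ?c X z else 0)"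
      by (rule sum.cong) (auto simp: gm_def)
    also have "\<dots> = ?c (gmap (S \<union> T) \<Delta>) z"
      by (rule sum_single) (use SC_finite[OF U] gY in auto)
    finally have lhs: "(\<Sum>X\<in>?Y. gm (S \<union> T) \<Delta> X * ?c X z) = ?c (gmap (S \<union> T) \<Delta>) z" .
    show "(\<Sum>X\<in>?Y. gm (S \<union> T) \<Delta> X * ?c X z) = (\<Sum>q\<in>SC S \<times> SC T. ?cd \<Delta> q * ?t q z)"
    proof (cases "\<Delta> = (\<Delta> \<inter> Pow S) \<union> (\<Delta> \<inter> Pow T)")
      case True
      note gs = g_split2[OF S T ST D True]
      let ?q0 = "(\<Delta> \<inter> Pow S, \<Delta> \<inter> Pow T)"
      have q0: "?q0 \<in> SC S \<times> SC T" using D1 D2 by simp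
      have iff: "\<Delta> = fst q \<union> snd q \<longleftrightarrow> q = ?q0" if q: "q \<in> SC S \<times> SC T" for q
      proof
        assume e: "\<Delta> = fst q \<union> snd q"
        have q12: "fst q \<in> SC S" "snd q \<in> SC T" using q by auto
        show "q = ?q0" using union_restr[OF ST q12] e by (cases q) auto
      next
        assume "q = ?q0"
        then show "\<Delta> = fst q \<union> snd q" using True by simp
      qed
      have "(\<Sum>q\<in>SC S \<times> SC T. ?cd \<Delta> q * ?t q z) = (\<Sum>q\<in>SC S \<times> SC T. if q = ?q0 then ?t q z else 0)"
        using iff by (intro sum.cong) auto
      also have "\<dots> = ?t ?q0 z"
        by (rule sum_single) (use SC_finite[OF S] SC_finite[OF T] q0 in auto)
      also have "\<dots> = (if z = (gmap S (\<Delta> \<inter> Pow S), gmap T (\<Delta> \<inter> Pow T)) then 1 else 0)"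
        by (cases z) (simp add: gm_def)
      also have "\<dots> = ?c (gmap (S \<union> T) \<Delta>) z"
        using gs by simp
      finally show ?thesis using lhs by simp
    next
      case False
      have "(\<Sum>q\<in>SC S \<times> SC T. ?cd \<Delta> q * ?t q z) = 0"
      proof (intro sum.neutral ballI)
        fix q assume q: "q \<in> SC S \<times> SC T"
        have "\<Delta> \<noteq> fst q \<union> snd q"
        proof
          assume e: "\<Delta> = fst q \<union> snd q"
          have q12: "fst q \<in> SC S" "snd q \<in> SC T" using q by auto
          have "\<Delta> \<inter> Pow S = fst q" "\<Delta> \<inter> Pow T = snd q" using union_restr[OF ST q12] e by auto
          then show False using False e by simp
        qed
        then show "?cd \<Delta> q * ?t q z = 0" by simp
      qed
      moreover have "\<not> (\<forall>A\<in>fst ` gmap (S \<union> T) \<Delta>. A \<subseteq> S \<or> A \<subseteq> T)"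
        using g_split1[OF D] False by blast
      ultimately show ?thesis using lhs by simp
    qed
  qed
  then show ?thesis using L R by simp
qed

lemma tensor_comp:
  fixes a :: "'x1 \<Rightarrow> 'u \<Rightarrow> 'k::comm_ring_1" and b :: "'x2 \<Rightarrow> 'v \<Rightarrow> 'k"
    and c :: "'y1 \<Rightarrow> 'x1 \<Rightarrow> 'k" and d :: "'y2 \<Rightarrow> 'x2 \<Rightarrow> 'k"
  assumes G: "finite (supp G)" and Y1: "finite Y1" and Y2: "finite Y2"
    and c: "\<And>x. supp (c x) \<subseteq> Y1" and d: "\<And>y. supp (d y) \<subseteq> Y2"
  shows "tensor_map (lin a) (lin b) (tensor_map (lin c) (lin d) G) =
         tensor_map (\<lambda>f. lin a (lin c f)) (\<lambda>f. lin b (lin d f)) (G :: _ \<Rightarrow> 'k::comm_ring_1)"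
proof -
  let ?t1 = "\<lambda>q (u, v). a (fst q) u * b (snd q) v"
  let ?t2 = "\<lambda>p (u, v). c (fst p) u * d (snd p) v"
  have "tensor_map (lin a) (lin b) (tensor_map (lin c) (lin d) G) = lin ?t1 (lin ?t2 G)"
    by (simp add: tensor_lin)
  also have "\<dots> = lin (\<lambda>p z. \<Sum>q\<in>Y1 \<times> Y2. ?t2 p q * ?t1 q z) G"
  proof (rule lin_comp[OF G])
    show "finite (Y1 \<times> Y2)" using Y1 Y2 by simp
    fix p show "supp (?t2 p) \<subseteq> Y1 \<times> Y2"
    proof
      fix q assume "q \<in> supp (?t2 p)"
      moreover obtain u v where q1: "q = (u, v)" by (cases q)
      ultimately have q: "q = (u, v)" "c (fst p) u * d (snd p) v \<noteq> 0" by (auto simp: supp_def)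
      then have "c (fst p) u \<noteq> 0" "d (snd p) v \<noteq> 0" by auto
      then show "q \<in> Y1 \<times> Y2" using c d q(1) by (auto simp: supp_def)
    qed
  qed
  also have "\<dots> = tensor_map (\<lambda>f. lin a (lin c f)) (\<lambda>f. lin b (lin d f)) G"
  proof (rule ext)
    fix z :: "'u \<times> 'v"
    obtain u v where z: "z = (u, v)" by (cases z)
    have "lin (\<lambda>p z. \<Sum>q\<in>Y1 \<times> Y2. ?t2 p q * ?t1 q z) G z =
          (\<Sum>p\<in>supp G. G p * (\<Sum>q\<in>Y1 \<times> Y2. ?t2 p q * ?t1 q z))" by (simp add: lin_def)
    also have "\<dots> = (\<Sum>p\<in>supp G. G p * lin a (c (fst p)) u * lin b (d (snd p)) v)"
    proof (rule sum.cong[OF refl])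
      fix p
      have "(\<Sum>q\<in>Y1 \<times> Y2. ?t2 p q * ?t1 q z) = (\<Sum>x\<in>Y1. \<Sum>y\<in>Y2. (c (fst p) x * a x u) * (d (snd p) y * b y v))"
        unfolding z by (simp add: sum.cartesian_product split_def mult_ac)
      also have "\<dots> = (\<Sum>x\<in>Y1. c (fst p) x * a x u) * (\<Sum>y\<in>Y2. d (snd p) y * b y v)"
        by (simp add: sum_product)
      also have "\<dots> = lin a (c (fst p)) u * lin b (d (snd p)) v"
        using lin_eq_sum[OF Y1 c[of "fst p"], where a=a and y=u] lin_eq_sum[OF Y2 d[of "snd p"], where a=b and y=v] by simp
      finally show "G p * (\<Sum>q\<in>Y1 \<times> Y2. ?t2 p q * ?t1 q z) = G p * lin a (c (fst p)) u * lin b (d (snd p)) v"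
        by (simp add: mult.assoc)
    qed
    also have "\<dots> = tensor_map (\<lambda>f. lin a (lin c f)) (\<lambda>f. lin b (lin d f)) G z"
      unfolding z tensor_map_def by simp
    finally show "lin (\<lambda>p z. \<Sum>q\<in>Y1 \<times> Y2. ?t2 p q * ?t1 q z) G z =
                  tensor_map (\<lambda>f. lin a (lin c f)) (\<lambda>f. lin b (lin d f)) G z" .
  qed
  finally show ?thesis .
qed

lemma linear_on_comp:
  assumes "linear_on U V \<theta>" "linear_on V W \<phi>"
  shows "linear_on U W (\<lambda>f. \<phi> (\<theta> f))"
  using assms unfolding linear_on_def by simp

lemma relab_dual: "relab (lin_dual H) = relab H"
  by (simp add: relab_def[abs_def])

definition psi :: "'a set \<Rightarrow> ('a set set \<Rightarrow> 'k::comm_ring_1) \<Rightarrow> ('a set \<times> nat) set \<Rightarrow> 'k" where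
  "psi I f = phi I (theta I f)"

lemma theta_fspace:
  assumes I: "finite I" and f: "f \<in> fspace (SC I)"
  shows "theta I f \<in> fspace (SC I)"
proof -
  have "\<And>x. x \<in> SC I \<Longrightarrow> supp (thmx I x) \<subseteq> SC I" using supp_thm by blast
  then show ?thesis unfolding theta_def by (rule lin_fspace[OF SC_finite[OF I] _ f])
qed

lemma psi_species_iso: "species_iso (kSC :: ('a, 'a set set, 'k::field) lspecies) SQ psi"
  unfolding species_iso_def basis_kSC basis_SQ
proof (intro conjI allI impI)
  fix I :: "'a set" assume I: "finite I"
  have t: "lin_iso (fspace (SC I)) (fspace (SC I)) (theta I :: _ \<Rightarrow> _ \<Rightarrow> 'k)" by (rule theta_lin_iso[OF I])
  have p: "lin_iso (fspace (SC I)) (fspace (Sq_basis qq I)) (phi I :: _ \<Rightarrow> _ \<Rightarrow> 'k)" by (rule phi_iso[OF I])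
  have "linear_on (fspace (SC I)) (fspace (Sq_basis qq I)) (\<lambda>f. phi I (theta I f) :: _ \<Rightarrow> 'k)"
    by (rule linear_on_comp[where V="fspace (SC I)" and \<theta>="theta I" and \<phi>="phi I"])
       (use t p in \<open>simp_all add: lin_iso_def\<close>)
  moreover have "bij_betw (phi I \<circ> theta I :: _ \<Rightarrow> _ \<Rightarrow> 'k) (fspace (SC I)) (fspace (Sq_basis qq I))"
    by (rule bij_betw_trans[where B="fspace (SC I)"]) (use t p in \<open>simp_all add: lin_iso_def\<close>)
  then have "bij_betw (\<lambda>f. phi I (theta I f) :: _ \<Rightarrow> 'k) (fspace (SC I)) (fspace (Sq_basis qq I))"
    by (simp add: comp_def)
  ultimately show "lin_iso (fspace (SC I)) (fspace (Sq_basis qq I)) (psi I :: _ \<Rightarrow> _ \<Rightarrow> 'k)"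
    by (simp add: lin_iso_def psi_def[abs_def])
next
  fix I J :: "'a set" and \<sigma> :: "'a \<Rightarrow> 'a" and f :: "'a set set \<Rightarrow> 'k"
  assume I: "finite I" and bij: "bij_betw \<sigma> I J" and f: "f \<in> fspace (SC I)"
  have "psi J (relab kSC \<sigma> I f) = phi J (relab (lin_dual kSC) \<sigma> I (theta I f))"
    by (simp add: psi_def theta_nat[OF I bij f])
  also have "\<dots> = phi J (relab kSC \<sigma> I (theta I f))" by (simp add: relab_dual)
  also have "\<dots> = relab SQ \<sigma> I (phi I (theta I f))" by (rule phi_nat[OF I bij theta_fspace[OF I f]])
  finally show "psi J (relab kSC \<sigma> I f) = relab SQ \<sigma> I (psi I f)" by (simp add: psi_def)
qed

lemma psi_comonoid: "comonoid_morph (kSC :: ('a, 'a set set, 'k::field) lspecies) SQ psi"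
  unfolding comonoid_morph_def basis_kSC
proof (intro conjI allI impI ballI)
  fix S T :: "'a set" and f :: "'a set set \<Rightarrow> 'k"
  assume S: "finite S" and T: "finite T" and ST: "S \<inter> T = {}" and f: "f \<in> fspace (SC (S \<union> T))"
  have U: "finite (S \<union> T)" using S T by simp
  have cf: "comult kSC S T f \<in> fspace (SC S \<times> SC T)"
    unfolding comult_kSC
  proof (rule lin_fspace[OF _ _ f])
    show "finite (SC S \<times> SC T)" using SC_finite[OF S] SC_finite[OF T] by simp
    fix \<Gamma> assume "\<Gamma> \<in> SC (S \<union> T)"
    then have "(\<Gamma> \<inter> Pow S, \<Gamma> \<inter> Pow T) \<in> SC S \<times> SC T" using SC_restr by blast
    then show "supp (\<lambda>p. if p = (\<Gamma> \<inter> Pow S, \<Gamma> \<inter> Pow T) then 1 else (0::'k)) \<subseteq> SC S \<times> SC T"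
      by (auto simp: supp_def)
  qed
  have "comult SQ S T (psi (S \<union> T) f) = comult SQ S T (phi (S \<union> T) (theta (S \<union> T) f))"
    by (simp add: psi_def)
  also have "\<dots> = tensor_map (phi S) (phi T) (comult (lin_dual kSC) S T (theta (S \<union> T) f))"
    by (rule phi_comult[OF S T ST theta_fspace[OF U f]])
  also have "\<dots> = tensor_map (phi S) (phi T) (tensor_map (theta S) (theta T) (comult kSC S T f))"
    by (simp add: theta_comult[OF S T ST f])
  also have "\<dots> = tensor_map (\<lambda>f. phi S (theta S f)) (\<lambda>f. phi T (theta T f)) (comult kSC S T f)"
    unfolding phi_def theta_def
    by (rule tensor_comp[OF _ SC_finite[OF S] SC_finite[OF T] supp_thm supp_thm])
       (use cf in \<open>simp add: fspace_def\<close>)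
  also have "\<dots> = tensor_map (psi S) (psi T) (comult kSC S T f)"
    by (simp add: psi_def[abs_def])
  finally show "comult SQ S T (psi (S \<union> T) f) = tensor_map (psi S) (psi T) (comult kSC S T f)" .
next
  fix f :: "'a set set \<Rightarrow> 'k" assume f: "f \<in> fspace (SC {})"
  have "ccounit SQ (psi {} f) = ccounit (lin_dual kSC) (theta {} f)"
    unfolding psi_def by (rule phi_counit[OF theta_fspace[OF _ f]]) simp
  also have "\<dots> = ccounit kSC f" by (rule theta_counit[OF f])
  finally show "ccounit SQ (psi {} f) = ccounit kSC f" .
qed

lemma phi_species_iso: "species_iso (kSC :: ('a, 'a set set, 'k::comm_ring_1) lspecies) SQ phi"
  unfolding species_iso_def basis_kSC basis_SQ
proof (intro conjI allI impI)
  fix I :: "'a set" assume "finite I"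
  then show "lin_iso (fspace (SC I)) (fspace (Sq_basis qq I)) (phi I :: _ \<Rightarrow> _ \<Rightarrow> 'k)" by (rule phi_iso)
next
  fix I J :: "'a set" and \<sigma> :: "'a \<Rightarrow> 'a" and f :: "'a set set \<Rightarrow> 'k"
  assume "finite I" "bij_betw \<sigma> I J" "f \<in> fspace (SC I)"
  then show "phi J (relab kSC \<sigma> I f) = relab SQ \<sigma> I (phi I f)" by (rule phi_nat)
qed

lemma phi_monoid: "monoid_morph (kSC :: ('a, 'a set set, 'k::comm_ring_1) lspecies) SQ phi"
  unfolding monoid_morph_def basis_kSC
proof (intro conjI allI impI)
  fix S T :: "'a set" and F :: "'a set set \<times> 'a set set \<Rightarrow> 'k"
  assume "finite S" "finite T" "S \<inter> T = {}" "F \<in> fspace (SC S \<times> SC T)"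
  then show "phi (S \<union> T) (mult kSC S T F) = mult SQ S T (tensor_map (phi S) (phi T) F)" by (rule phi_mult)
next
  show "phi {} (munit kSC) = (munit SQ :: _ \<Rightarrow> 'k)" by (rule phi_unit)
qed

lemma theta_species_iso: "species_iso (kSC :: ('a, 'a set set, 'k::field) lspecies) (lin_dual kSC) theta"
  unfolding species_iso_def basis_kSC basis_dual
proof (intro conjI allI impI)
  fix I :: "'a set" assume "finite I"
  then show "lin_iso (fspace (SC I)) (fspace (SC I)) (theta I :: _ \<Rightarrow> _ \<Rightarrow> 'k)" by (rule theta_lin_iso)
next
  fix I J :: "'a set" and \<sigma> :: "'a \<Rightarrow> 'a" and f :: "'a set set \<Rightarrow> 'k"
  assume "finite I" "bij_betw \<sigma> I J" "f \<in> fspace (SC I)"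
  then show "theta J (relab kSC \<sigma> I f) = relab (lin_dual kSC) \<sigma> I (theta I f)" by (rule theta_nat)
qed

lemma theta_monoid: "monoid_morph (kSC :: ('a, 'a set set, 'k::comm_ring_1) lspecies) (lin_dual kSC) theta"
  unfolding monoid_morph_def basis_kSC
proof (intro conjI allI impI)
  fix S T :: "'a set" and F :: "'a set set \<times> 'a set set \<Rightarrow> 'k"
  assume "finite S" "finite T" "S \<inter> T = {}" "F \<in> fspace (SC S \<times> SC T)"
  then show "theta (S \<union> T) (mult kSC S T F) = mult (lin_dual kSC) S T (tensor_map (theta S) (theta T) F)"
    by (rule theta_mult)
next
  show "theta {} (munit kSC) = (munit (lin_dual kSC) :: _ \<Rightarrow> 'k)" by (rule theta_unit)
qed

lemma theta_comonoid: "comonoid_morph (kSC :: ('a, 'a set set, 'k::comm_ring_1) lspecies) (lin_dual kSC) theta"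
  unfolding comonoid_morph_def basis_kSC
proof (intro conjI allI impI ballI)
  fix S T :: "'a set" and f :: "'a set set \<Rightarrow> 'k"
  assume "finite S" "finite T" "S \<inter> T = {}" "f \<in> fspace (SC (S \<union> T))"
  then show "comult (lin_dual kSC) S T (theta (S \<union> T) f) = tensor_map (theta S) (theta T) (comult kSC S T f)"
    by (rule theta_comult)
next
  fix f :: "'a set set \<Rightarrow> 'k" assume "f \<in> fspace (SC {})"
  then show "ccounit (lin_dual kSC) (theta {} f) = ccounit kSC f" by (rule theta_counit)
qed

theorem mainTheorem17:
  shows "(\<exists>q qact \<phi>. set_species q qact \<and> q {} = {}
            \<and> species_iso (kSC :: ('a, 'a set set, 'k::field_char_0) lspecies) (Sq q qact) \<phi>
            \<and> monoid_morph (kSC :: ('a, 'a set set, 'k) lspecies) (Sq q qact) \<phi>)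
       \<and> (\<exists>q qact \<psi>. set_species q qact \<and> q {} = {}
            \<and> species_iso (kSC :: ('a, 'a set set, 'k) lspecies) (Sq q qact) \<psi>
            \<and> comonoid_morph (kSC :: ('a, 'a set set, 'k) lspecies) (Sq q qact) \<psi>)
       \<and> (\<exists>\<theta>. species_iso (kSC :: ('a, 'a set set, 'k) lspecies) (lin_dual kSC) \<theta>
            \<and> monoid_morph (kSC :: ('a, 'a set set, 'k) lspecies) (lin_dual kSC) \<theta>
            \<and> comonoid_morph (kSC :: ('a, 'a set set, 'k) lspecies) (lin_dual kSC) \<theta>)"
proof (intro conjI)
  show "\<exists>q qact \<phi>. set_species q qact \<and> q {} = {}
            \<and> species_iso (kSC :: ('a, 'a set set, 'k) lspecies) (Sq q qact) \<phi>
            \<and> monoid_morph (kSC :: ('a, 'a set set, 'k) lspecies) (Sq q qact) \<phi>"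
    by (intro exI[of _ qq] exI[of _ qa] exI[of _ phi] conjI set_species_qq qq_empty phi_species_iso phi_monoid)
  show "\<exists>q qact \<psi>. set_species q qact \<and> q {} = {}
            \<and> species_iso (kSC :: ('a, 'a set set, 'k) lspecies) (Sq q qact) \<psi>
            \<and> comonoid_morph (kSC :: ('a, 'a set set, 'k) lspecies) (Sq q qact) \<psi>"
    by (intro exI[of _ qq] exI[of _ qa] exI[of _ psi] conjI set_species_qq qq_empty psi_species_iso psi_comonoid)
  show "\<exists>\<theta>. species_iso (kSC :: ('a, 'a set set, 'k) lspecies) (lin_dual kSC) \<theta>
            \<and> monoid_morph (kSC :: ('a, 'a set set, 'k) lspecies) (lin_dual kSC) \<theta>
            \<and> comonoid_morph (kSC :: ('a, 'a set set, 'k) lspecies) (lin_dual kSC) \<theta>"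
    by (intro exI[of _ theta] conjI theta_species_iso theta_monoid theta_comonoid)
qed

end
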